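(* Let $d\in\mathbb{N}$. For every $\alpha\in[0,d)$ there exists a non-empty compact set $K\subset\mathbb{R}^d$ with $\dim_{\mathrm{A}} K=\alpha$ such that every microset $E\in\mathcal{G}_K$ satisfies $\dim_{\mathrm{ML}} E=0$.
   Context: $B(x,r)$ denotes the closed ball of centre $x$ and radius $r$, and $N_r(F)$ denotes the minimal number of closed balls of radius $r$ centred in $F$ needed to cover $F$. For a non-empty compact $K\subset\mathbb{R}^d$, a miniset of $K$ is a non-empty compact set of the form $\lambda(K-x)\cap B(0,1)$ with $x\in K$ and $\lambda\geq1$; a microset of $K$ is any limit, in the Hausdorff metric, of a sequence of minisets of $K$; $\mathcal{G}_K$ denotes the set of microsets of $K$. The Assouad dimension is $\dim_{\mathrm{A}} K=\inf\{\alpha>0:\exists C>0\ \forall 0<r\leq R<1\ \forall x\in K,\ N_r(B(x,R)\cap K)\leq C(R/r)^\alpha\}$. The lower dimension of a non-empty set $F$ is $\dim_{\mathrm{L}} F=\sup\{\alpha>0:\exists C>0\ \forall 0<r\leq R<1\ \forall x\in F,\ N_r(B(x,R)\cap F)\geq C(R/r)^\alpha\}$ (with $\sup\varnothing=0$). The modified lower dimension is $\dim_{\mathrm{ML}} E=\sup\{\dim_{\mathrm{L}} F:\varnothing\neq F\subset E\}$. *)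

theory Defs
  imports "HOL-Analysis.Analysis"
begin

definition covnum :: "real \<Rightarrow> 'a::metric_space set \<Rightarrow> nat" where
  "covnum r F = Inf {card C | C. finite C \<and> C \<subseteq> F \<and> F \<subseteq> (\<Union>c\<in>C. cball c r)}"

definition assouad_dim :: "'a::metric_space set \<Rightarrow> real" where
  "assouad_dim K = Inf {\<alpha>. \<alpha> > 0 \<and> (\<exists>C>0. \<forall>r R x. 0 < r \<and> r \<le> R \<and> R < 1 \<and> x \<in> K \<longrightarrow>
        real (covnum r (cball x R \<inter> K)) \<le> C * (R / r) powr \<alpha>)}"

definition lower_dim :: "'a::metric_space set \<Rightarrow> real" where
  "lower_dim F = (let S = {\<alpha>. \<alpha> > 0 \<and> (\<exists>C>0. \<forall>r R x. 0 < r \<and> r \<le> R \<and> R < 1 \<and> x \<in> F \<longrightarrow>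
        real (covnum r (cball x R \<inter> F)) \<ge> C * (R / r) powr \<alpha>)} in
     if S = {} then 0 else Sup S)"

definition mod_lower_dim :: "'a::metric_space set \<Rightarrow> real" where
  "mod_lower_dim E = Sup {lower_dim F | F. F \<noteq> {} \<and> F \<subseteq> E}"

definition minisets :: "'a::real_normed_vector set \<Rightarrow> 'a set set" where
  "minisets K = {(\<lambda>v. t *\<^sub>R (v - x)) ` K \<inter> cball 0 1 | x t. x \<in> K \<and> t \<ge> 1}"

definition hausdorff_dist :: "'a::metric_space set \<Rightarrow> 'a set \<Rightarrow> real" where
  "hausdorff_dist A B = max (SUP a\<in>A. infdist a B) (SUP b\<in>B. infdist b A)"

definition microsets :: "'a::real_normed_vector set \<Rightarrow> 'a set set" where
  "microsets K = {E. compact E \<and> E \<noteq> {} \<and> (\<exists>S. (\<forall>n. S n \<in> minisets K) \<and>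
        (\<lambda>n. hausdorff_dist (S n) E) \<longlonglongrightarrow> 0)}"

end

theory Submission
  imports Defs
begin

fun bs :: "nat \<Rightarrow> nat" where
  "bs n = (if n = 0 then 0 else n mod 2 + bs (n div 2))"
declare bs.simps[simp del]

lemma bs_0[simp]: "bs 0 = 0" by (simp add: bs.simps)
lemma bs_even: "bs (2*n) = bs n"
  by (cases "n = 0") (simp_all add: bs.simps[of "2*n"])
lemma bs_odd: "bs (2*n+1) = bs n + 1"
  by (subst bs.simps) simp

lemma bs_Suc: "bs (Suc n) \<le> bs n + 1"
proof (induction n rule: less_induct)
  case (less n)
  show ?case
  proof (cases "even n")
    case True
    then obtain m where "n = 2*m" by auto
    then show ?thesis using bs_odd[of m] bs_even[of m] by simp
  next
    case False
    then obtain m where m: "n = 2*m+1" by (metis oddE)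
    then have "Suc n = 2*(Suc m)" by simp
    then have "bs (Suc n) = bs (Suc m)" using bs_even by metis
    also have "\<dots> \<le> bs m + 1" using less m by simp
    also have "\<dots> = bs n" using m bs_odd by simp
    finally show ?thesis by simp
  qed
qed

lemma bs_add: "bs (a + b) \<le> bs a + bs b"
proof (induction "a+b" arbitrary: a b rule: less_induct)
  case less
  show ?case
  proof (cases "a = 0 \<or> b = 0")
    case True then show ?thesis by auto
  next
    case False
    obtain a' where a: "a = 2*a' \<or> a = 2*a'+1" by (metis oddE evenE)
    obtain b' where b: "b = 2*b' \<or> b = 2*b'+1" by (metis oddE evenE)
    have lt: "a' + b' < a + b" "a' + b' + 1 < a + b \<or> (a = 2*a'+1 \<and> b = 2*b'+1 \<and> a'+b'+1 < a+b)"
      using a b False by auto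
    have IH: "bs (a'+b') \<le> bs a' + bs b'" using less lt by blast
    show ?thesis
    proof -
      { assume "a = 2*a'" "b = 2*b'"
        then have "a + b = 2*(a'+b')" by simp
        then have "bs (a+b) = bs (a'+b')" using bs_even by metis
        then have ?thesis using IH bs_even \<open>a = 2*a'\<close> \<open>b = 2*b'\<close> by simp }
      moreover
      { assume "a = 2*a'+1" "b = 2*b'"
        then have "a + b = 2*(a'+b')+1" by simp
        then have "bs (a+b) = bs (a'+b') + 1" using bs_odd by metis
        then have ?thesis using IH bs_even bs_odd \<open>a = 2*a'+1\<close> \<open>b = 2*b'\<close> by simp }
      moreover
      { assume "a = 2*a'" "b = 2*b'+1"
        then have "a + b = 2*(a'+b')+1" by simp
        then have "bs (a+b) = bs (a'+b') + 1" using bs_odd by metis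
        then have ?thesis using IH bs_even bs_odd \<open>a = 2*a'\<close> \<open>b = 2*b'+1\<close> by simp }
      moreover
      { assume A: "a = 2*a'+1" "b = 2*b'+1"
        then have "a + b = 2*(Suc (a'+b'))" by simp
        then have "bs (a+b) = bs (Suc (a'+b'))" using bs_even by metis
        also have "\<dots> \<le> bs (a'+b') + 1" by (rule bs_Suc)
        finally have ?thesis using IH bs_odd A by simp }
      ultimately show ?thesis using a b by blast
    qed
  qed
qed

lemma bs_le: "bs n \<le> n"
  by (induction n) (use bs_Suc le_trans in fastforce)+

lemma bs_pow: "2 ^ bs n \<le> n + 1"
proof (induction n rule: less_induct)
  case (less n)
  show ?case
  proof (cases "n = 0")
    case True then show ?thesis by simp
  next
    case False
    obtain m where m: "n = 2*m \<or> n = 2*m+1" by (metis oddE evenE)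
    have "m < n" using m False by auto
    then have "2 ^ bs m \<le> m + 1" using less by blast
    then show ?thesis using m bs_even bs_odd by auto
  qed
qed

lemma bs_good: "2^t dvd n \<Longrightarrow> n \<ge> 1 \<Longrightarrow> bs n + t \<le> bs (n - 1) + 1"
proof (induction t arbitrary: n)
  case 0
  then show ?case using bs_Suc[of "n-1"] by simp
next
  case (Suc t)
  then obtain w where w: "n = 2*w" "2^t dvd w" by auto
  have "w \<ge> 1" using w Suc.prems by simp
  have "n - 1 = 2*(w-1)+1" using w \<open>w\<ge>1\<close> by simp
  then have "bs (n-1) = bs (w-1) + 1" using bs_odd by simp
  moreover have "bs n = bs w" using w bs_even by simp
  ultimately show ?case using Suc.IH[OF w(2) \<open>w\<ge>1\<close>] by simp
qed

lemma bs_notgood: "\<not> 2^t dvd n \<Longrightarrow> n \<ge> 1 \<Longrightarrow> bs (n - 1) + 2 \<le> bs n + t"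
proof (induction t arbitrary: n)
  case 0
  then show ?case by simp
next
  case (Suc t)
  show ?case
  proof (cases "even n")
    case False
    then obtain w where w: "n = 2*w+1" by (metis oddE)
    then show ?thesis using bs_odd bs_even by simp
  next
    case True
    then obtain w where w: "n = 2*w" by auto
    have "w \<ge> 1" using w Suc.prems by simp
    have nd: "\<not> 2^t dvd w" using Suc.prems w by auto
    have "n - 1 = 2*(w-1)+1" using w \<open>w\<ge>1\<close> by simp
    then have "bs (n-1) = bs (w-1) + 1" using bs_odd by simp
    moreover have "bs n = bs w" using w bs_even by simp
    ultimately show ?thesis using Suc.IH[OF nd \<open>w\<ge>1\<close>] by simp
  qed
qed

locale cant = fixes a :: real assumes a0: "0 < a" and a1: "a < 1"
begin

definition cc :: real where "cc = (1-a)*ln 2/2"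
definition TT :: "nat \<Rightarrow> real" where "TT n = exp (-(real n * ln 2 - cc * real (bs n))/a)"
definition lam :: real where "lam = (ln 2 - cc)/a"
definition rmax :: real where "rmax = exp (- lam)"
definition kap :: real where "kap = 1 - 2*rmax"

lemma ln2_pos: "ln (2::real) > 0" by simp

lemma cc_pos: "cc > 0" using a1 by (simp add: cc_def)

lemma TT_pos: "TT n > 0" by (simp add: TT_def)
lemma TT0[simp]: "TT 0 = 1" by (simp add: TT_def)

lemma TT_Suc: "TT (Suc n) = TT n * exp (-(ln 2 - cc*(real (bs (Suc n)) - real (bs n)))/a)"
proof -
  have "-(real (Suc n) * ln 2 - cc * real (bs (Suc n)))/a
      = -(real n * ln 2 - cc * real (bs n))/a + -(ln 2 - cc*(real (bs (Suc n)) - real (bs n)))/a"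
    using a0 by (simp add: field_simps)
  then show ?thesis by (simp add: TT_def exp_add[symmetric])
qed

lemma lam_gt: "lam > ln 2"
proof -
  have "cc < (1-a)*ln 2" using a1 by (simp add: cc_def)
  then have "a * ln 2 < ln 2 - cc" by (simp add: algebra_simps)
  then show ?thesis using a0 by (simp add: lam_def field_simps)
qed

lemma lam_pos: "lam > 0" using lam_gt ln2_pos by linarith

lemma rmax_pos: "rmax > 0" by (simp add: rmax_def)
lemma rmax_half: "rmax < 1/2"
proof -
  have "exp (- lam) < exp (- ln 2)" using lam_gt by simp
  then show ?thesis by (simp add: rmax_def exp_minus)
qed
lemma kap_pos: "kap > 0" using rmax_half by (simp add: kap_def)
lemma kap_le1: "kap \<le> 1" using rmax_pos by (simp add: kap_def)

lemma TT_Suc_le: "TT (Suc n) \<le> rmax * TT n"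
proof -
  have "real (bs (Suc n)) \<le> real (bs n) + 1" using bs_Suc[of n] by linarith
  then have "cc*(real (bs (Suc n)) - real (bs n)) \<le> cc" using cc_pos
    by (metis add.commute diff_le_eq mult.right_neutral mult_left_mono less_imp_le)
  then have "-(ln 2 - cc*(real (bs (Suc n)) - real (bs n)))/a \<le> -(ln 2 - cc)/a"
    using a0 by (intro divide_right_mono) auto
  then have "-(ln 2 - cc*(real (bs (Suc n)) - real (bs n)))/a \<le> - lam"
    by (simp add: lam_def minus_divide_left)
  then have "exp (-(ln 2 - cc*(real (bs (Suc n)) - real (bs n)))/a) \<le> rmax"
    by (simp add: rmax_def)
  then show ?thesis using TT_Suc[of n] TT_pos[of n] by (simp add: mult.commute mult_left_mono)
qed

lemma TT_Suc_less: "TT (Suc n) < TT n"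
proof -
  have "rmax * TT n < 1 * TT n" by (rule mult_strict_right_mono) (use rmax_half TT_pos[of n] in auto)
  then show ?thesis using TT_Suc_le[of n] by simp
qed

lemma TT_anti: "m \<le> n \<Longrightarrow> TT n \<le> TT m"
proof (induction n)
  case 0 then show ?case by simp
next
  case (Suc n)
  then show ?case using TT_Suc_less[of n] by (cases "m = Suc n") auto
qed

lemma TT_le1: "TT n \<le> 1" using TT_anti[of 0 n] by simp

lemma TT_shift: "TT (n + w) \<le> rmax ^ w * TT n"
proof (induction w)
  case 0 then show ?case by simp
next
  case (Suc w)
  have "TT (n + Suc w) \<le> rmax * TT (n + w)" using TT_Suc_le[of "n+w"] by simp
  also have "\<dots> \<le> rmax * (rmax ^ w * TT n)" using Suc rmax_pos by (simp add: mult_left_mono)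
  finally show ?case by simp
qed

lemma TT_small: "e > 0 \<Longrightarrow> \<exists>n. TT n < e"
proof -
  assume "e > 0"
  obtain n where n: "rmax ^ n < e" using real_arch_pow_inv[OF \<open>e>0\<close>, of rmax] rmax_half rmax_pos by auto
  show ?thesis using TT_shift[of 0 n] n by (intro exI[of _ n]) simp
qed

lemma window: "n \<le> k \<Longrightarrow> 2 ^ (k - n) = (TT n / TT k) powr a * exp (cc*(real (bs k) - real (bs n)))"
proof -
  assume "n \<le> k"
  have "ln (TT n / TT k) = (-(real n * ln 2 - cc * real (bs n)) + (real k * ln 2 - cc * real (bs k)))/a"
    using TT_pos by (simp add: ln_div TT_def diff_divide_distrib add_divide_distrib)
  then have "(TT n / TT k) powr a = exp ((real k - real n) * ln 2 - cc*(real (bs k) - real (bs n)))"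
    using a0 TT_pos[of n] TT_pos[of k] by (simp add: powr_def field_simps)
  then have "(TT n / TT k) powr a * exp (cc*(real (bs k) - real (bs n))) = exp ((real k - real n) * ln 2)"
    by (simp add: exp_add[symmetric])
  also have "\<dots> = 2 powr (real k - real n)" by (simp add: powr_def)
  also have "\<dots> = 2 ^ (k - n)" using \<open>n \<le> k\<close> by (simp add: powr_realpow[symmetric] of_nat_diff)
  finally show ?thesis by simp
qed

lemma ratio_lower: "n \<le> k \<Longrightarrow> exp (lam * real (k - n)) \<le> TT n / TT k"
proof -
  assume "n \<le> k"
  then obtain w where k: "k = n + w" using le_Suc_ex by blast
  have "TT k \<le> rmax ^ w * TT n" using TT_shift k by simp
  also have "rmax ^ w = exp (- lam * real w)" by (simp add: rmax_def exp_of_nat_mult[symmetric])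
  finally have "TT k * exp (lam * real w) \<le> TT n"
    using TT_pos by (simp add: exp_minus field_simps)
  then show ?thesis using k TT_pos[of k] by (simp add: field_simps)
qed

lemma good_ratio: "2^t dvd (Suc j) \<Longrightarrow> TT (Suc j) \<le> exp (- cc * (real t - 1) / a) * TT j"
proof -
  assume "2^t dvd (Suc j)"
  from bs_good[OF this] have "real (bs (Suc j)) + real t \<le> real (bs j) + 1" by simp
  then have "cc*(real (bs (Suc j)) - real (bs j)) \<le> cc * (1 - real t)" using cc_pos
    by (intro mult_left_mono) auto
  then have "-(ln 2 - cc*(real (bs (Suc j)) - real (bs j))) \<le> - cc * (real t - 1)"
    using ln2_pos by (simp add: algebra_simps del: ln_gt_zero_iff)
  then have "-(ln 2 - cc*(real (bs (Suc j)) - real (bs j)))/a \<le> - cc * (real t - 1) / a"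
    using a0 by (intro divide_right_mono) auto
  then show ?thesis using TT_Suc[of j] TT_pos[of j] by (simp add: mult.commute mult_left_mono)
qed

definition rlow :: "nat \<Rightarrow> real" where "rlow t = exp (-(ln 2 + cc * real t)/a)"
lemma rlow_pos: "rlow t > 0" by (simp add: rlow_def)

lemma notgood_ratio: "\<not> 2^t dvd (Suc j) \<Longrightarrow> rlow t * TT j \<le> TT (Suc j)"
proof -
  assume "\<not> 2^t dvd (Suc j)"
  from bs_notgood[OF this] have "real (bs j) + 2 \<le> real (bs (Suc j)) + real t" by simp
  then have "cc * (- real t) \<le> cc*(real (bs (Suc j)) - real (bs j))" using cc_pos
    by (intro mult_left_mono) auto
  then have "-(ln 2 + cc * real t)/a \<le> -(ln 2 - cc*(real (bs (Suc j)) - real (bs j)))/a"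
    using a0 by (simp add: divide_right_mono algebra_simps)
  then show ?thesis using TT_Suc[of j] TT_pos[of j] by (simp add: rlow_def mult.commute mult_right_mono)
qed

end

context cant begin

definition dl :: "nat \<Rightarrow> real" where "dl n = TT n - TT (Suc n)"

fun PP :: "nat \<Rightarrow> real set" where
  "PP 0 = {0}"
| "PP (Suc n) = PP n \<union> (\<lambda>p. p + dl n) ` PP n"

fun QQ :: "real \<Rightarrow> nat \<Rightarrow> nat \<Rightarrow> real set" where
  "QQ p n 0 = {p}"
| "QQ p n (Suc m) = QQ p n m \<union> (\<lambda>q. q + dl (n+m)) ` QQ p n m"

definition CC :: "nat \<Rightarrow> real set" where "CC n = (\<Union>p\<in>PP n. {p..p + TT n})"
definition Cs :: "real set" where "Cs = (\<Inter>n. CC n)"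

lemma gap: "TT (Suc n) + kap * TT n \<le> dl n"
  using TT_Suc_le[of n] by (simp add: dl_def kap_def algebra_simps)

lemma dl_pos: "dl n > 0" using TT_Suc_less[of n] by (simp add: dl_def)
lemma dl_less: "dl n < TT n" using TT_pos[of "Suc n"] by (simp add: dl_def)

lemma PP_finite: "finite (PP n)" by (induction n) auto

lemma PP_Suc_sub: "PP n \<subseteq> PP (Suc n)" by auto

lemma PP_mono: "m \<le> n \<Longrightarrow> PP m \<subseteq> PP n"
proof (induction n)
  case 0 then show ?case by simp
next
  case (Suc n)
  then show ?case using PP_Suc_sub[of n] by (auto simp: le_Suc_eq simp del: PP.simps)
qed

lemma PP_sep: "p \<in> PP (Suc n) \<Longrightarrow> q \<in> PP (Suc n) \<Longrightarrow> p \<noteq> q \<Longrightarrow> TT (Suc n) + kap * TT n \<le> \<bar>p - q\<bar>"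
proof (induction n arbitrary: p q)
  case 0
  then show ?case using gap[of 0] dl_pos[of 0] by auto
next
  case (Suc n)
  have key: "TT (Suc (Suc n)) + kap * TT (Suc n) \<le> \<bar>p - q\<bar>"
    if "p \<in> PP (Suc n)" "q \<in> PP (Suc n)" "p \<noteq> q" for p q
  proof -
    have "TT (Suc n) + kap * TT n \<le> \<bar>p - q\<bar>" using Suc.IH that by blast
    moreover have "TT (Suc (Suc n)) \<le> TT (Suc n)" using TT_Suc_less[of "Suc n"] by simp
    moreover have "kap * TT (Suc n) \<le> kap * TT n" using TT_Suc_less[of n] kap_pos by simp
    ultimately show ?thesis by simp
  qed
  have key2: "TT (Suc (Suc n)) + kap * TT (Suc n) \<le> \<bar>p - (q + dl (Suc n))\<bar>"
    if "p \<in> PP (Suc n)" "q \<in> PP (Suc n)" for p q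
  proof (cases "p = q")
    case True
    then show ?thesis using gap[of "Suc n"] dl_pos[of "Suc n"] by simp
  next
    case False
    have "TT (Suc n) + kap * TT n \<le> \<bar>p - q\<bar>" using Suc.IH that False by blast
    moreover have "kap * TT (Suc n) \<le> kap * TT n" using TT_Suc_less[of n] kap_pos by simp
    moreover have "dl (Suc n) = TT (Suc n) - TT (Suc (Suc n))" by (simp add: dl_def)
    moreover have "\<bar>p - q\<bar> \<le> \<bar>p - (q + dl (Suc n))\<bar> + \<bar>dl (Suc n)\<bar>"
      using abs_triangle_ineq[of "p - (q + dl (Suc n))" "dl (Suc n)"] by simp
    moreover have "\<bar>dl (Suc n)\<bar> = dl (Suc n)" using dl_pos[of "Suc n"] by simp
    ultimately show ?thesis by linarith
  qed
  have PS: "PP (Suc (Suc n)) = PP (Suc n) \<union> (\<lambda>p. p + dl (Suc n)) ` PP (Suc n)"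
    by (simp only: PP.simps(2)[of "Suc n"])
  from Suc.prems(1) consider "p \<in> PP (Suc n)" | p' where "p' \<in> PP (Suc n)" "p = p' + dl (Suc n)"
    unfolding PS by blast
  then show ?case
  proof cases
    case 1
    from Suc.prems(2) consider "q \<in> PP (Suc n)" | q' where "q' \<in> PP (Suc n)" "q = q' + dl (Suc n)"
      unfolding PS by blast
    then show ?thesis
    proof cases
      case 1 then show ?thesis using key \<open>p \<in> PP (Suc n)\<close> Suc.prems(3) by blast
    next
      case 2 then show ?thesis using key2 \<open>p \<in> PP (Suc n)\<close> by blast
    qed
  next
    case 2
    from Suc.prems(2) consider "q \<in> PP (Suc n)" | q' where "q' \<in> PP (Suc n)" "q = q' + dl (Suc n)"
      unfolding PS by blast
    then show ?thesis
    proof cases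
      case 1 then show ?thesis using key2[of q p'] 2 by (simp add: abs_minus_commute)
    next
      case 3: 2
      then have "p' \<noteq> q'" using 2 Suc.prems(3) by auto
      then show ?thesis using key[of p' q'] 2 3 by simp
    qed
  qed
qed

lemma PP_sep_strict: "p \<in> PP n \<Longrightarrow> q \<in> PP n \<Longrightarrow> p \<noteq> q \<Longrightarrow> TT n < \<bar>p - q\<bar>"
proof (cases n)
  case 0
  then show "p \<in> PP n \<Longrightarrow> q \<in> PP n \<Longrightarrow> p \<noteq> q \<Longrightarrow> TT n < \<bar>p - q\<bar>" by simp
next
  case (Suc m)
  assume "p \<in> PP n" "q \<in> PP n" "p \<noteq> q"
  then have "TT (Suc m) + kap * TT m \<le> \<bar>p - q\<bar>" using PP_sep Suc by blast
  moreover have "kap * TT m > 0" using kap_pos TT_pos by simp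
  ultimately show ?thesis using Suc by simp
qed

lemma sep_points:
  assumes "p \<in> PP (Suc n)" "q \<in> PP (Suc n)" "p \<noteq> q"
    "x \<in> {p..p + TT (Suc n)}" "y \<in> {q..q + TT (Suc n)}"
  shows "kap * TT n \<le> \<bar>x - y\<bar>"
  using PP_sep[OF assms(1-3)] assms(4,5) by auto

lemma CC_Suc: "CC (Suc n) \<subseteq> CC n"
proof
  fix x assume "x \<in> CC (Suc n)"
  then obtain p where p: "p \<in> PP (Suc n)" "x \<in> {p..p + TT (Suc n)}" by (auto simp: CC_def)
  have le: "TT (Suc n) \<le> TT n" using TT_Suc_less[of n] by simp
  from p(1) consider "p \<in> PP n" | p' where "p' \<in> PP n" "p = p' + dl n" by auto
  then show "x \<in> CC n"
  proof cases
    case 1 then show ?thesis using p le by (auto simp: CC_def)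
  next
    case 2 then show ?thesis using p le by (auto simp: CC_def dl_def intro!: bexI[of _ p'])
  qed
qed

lemma CC_anti: "m \<le> n \<Longrightarrow> CC n \<subseteq> CC m"
  by (induction n) (auto simp: le_Suc_eq dest: CC_Suc[THEN subsetD])

lemma Cs_sub: "Cs \<subseteq> CC n" by (auto simp: Cs_def)

lemma PP_in_CC: "q \<in> PP n \<Longrightarrow> q \<in> CC n"
  using TT_pos[of n] by (auto simp: CC_def intro!: bexI[of _ q])

lemma PP_in_Cs: "q \<in> PP k \<Longrightarrow> q \<in> Cs"
proof -
  assume q: "q \<in> PP k"
  have "q \<in> CC j" for j
  proof (cases "k \<le> j")
    case True then show ?thesis using q PP_mono PP_in_CC by blast
  next
    case False then show ?thesis using q PP_in_CC CC_anti[of j k] by auto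
  qed
  then show ?thesis by (auto simp: Cs_def)
qed

lemma zero_in_Cs: "0 \<in> Cs" using PP_in_Cs[of 0 0] by simp

lemma Cs_01: "Cs \<subseteq> {0..1}" using Cs_sub[of 0] by (simp add: CC_def)

lemma closed_Cs: "closed Cs"
  unfolding Cs_def CC_def using PP_finite by (intro closed_INT closed_UN) auto

lemma Cs_level: "x \<in> Cs \<Longrightarrow> \<exists>p\<in>PP n. x \<in> {p..p + TT n}"
proof -
  assume "x \<in> Cs"
  then have "x \<in> CC n" using Cs_sub by blast
  then show ?thesis unfolding CC_def by blast
qed

lemma QQ_sub: "q \<in> QQ p n m \<Longrightarrow> p \<le> q \<and> q + TT (n + m) \<le> p + TT n"
proof (induction m arbitrary: q)
  case 0 then show ?case by simp
next
  case (Suc m)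
  have le: "TT (Suc (n+m)) \<le> TT (n+m)" using TT_Suc_less by (simp add: less_imp_le)
  from Suc.prems consider "q \<in> QQ p n m" | q' where "q' \<in> QQ p n m" "q = q' + dl (n+m)" by auto
  then show ?case
  proof cases
    case 1 then show ?thesis using Suc.IH le by fastforce
  next
    case 2 then show ?thesis using Suc.IH[of q'] dl_pos[of "n+m"] by (auto simp: dl_def)
  qed
qed

lemma PP_QQ: "PP (n + m) = (\<Union>p\<in>PP n. QQ p n m)"
  by (induction m) auto

lemma QQ_finite: "finite (QQ p n m)" by (induction m) auto

lemma card_QQ_le: "card (QQ p n m) \<le> 2 ^ m"
proof (induction m)
  case 0 then show ?case by simp
next
  case (Suc m)
  have "card (QQ p n (Suc m)) \<le> card (QQ p n m) + card ((\<lambda>q. q + dl (n+m)) ` QQ p n m)"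
    by (simp add: card_Un_le)
  also have "\<dots> \<le> 2 * card (QQ p n m)" using card_image_le[OF QQ_finite] by simp
  finally show ?case using Suc by simp
qed

lemma card_QQ: "p \<in> PP n \<Longrightarrow> card (QQ p n m) = 2 ^ m"
proof (induction m)
  case 0 then show ?case by simp
next
  case (Suc m)
  have sub: "QQ p n m \<subseteq> PP (n + m)" using PP_QQ[of n m] Suc.prems by auto
  have disj: "QQ p n m \<inter> (\<lambda>q. q + dl (n+m)) ` QQ p n m = {}"
  proof (rule ccontr)
    assume "QQ p n m \<inter> (\<lambda>q. q + dl (n+m)) ` QQ p n m \<noteq> {}"
    then obtain q q' where qq: "q \<in> QQ p n m" "q' \<in> QQ p n m" "q = q' + dl (n+m)" by auto
    show False
    proof (cases "q = q'")
      case True then show False using qq dl_pos[of "n+m"] by simp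
    next
      case False
      then have "TT (n+m) < \<bar>q - q'\<bar>" using PP_sep_strict sub qq by blast
      then show False using qq dl_less[of "n+m"] dl_pos[of "n+m"] by simp
    qed
  qed
  have "card (QQ p n (Suc m)) = card (QQ p n m) + card ((\<lambda>q. q + dl (n+m)) ` QQ p n m)"
    using disj QQ_finite by (simp add: card_Un_disjoint)
  also have "card ((\<lambda>q. q + dl (n+m)) ` QQ p n m) = card (QQ p n m)"
    by (rule card_image) (simp add: inj_on_def)
  finally show ?case using Suc by simp
qed

lemma Cs_QQ:
  assumes x: "x \<in> Cs" and p: "p \<in> PP n" "x \<in> {p..p + TT n}"
  shows "\<exists>q\<in>QQ p n m. x \<in> {q..q + TT (n + m)}"
proof -
  obtain q where q: "q \<in> PP (n+m)" "x \<in> {q..q + TT (n+m)}" using Cs_level[OF x] by blast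
  then obtain p' where p': "p' \<in> PP n" "q \<in> QQ p' n m" using PP_QQ by auto
  have "x \<in> {p'..p' + TT n}" using QQ_sub[OF p'(2)] q(2) by auto
  have "p' = p"
  proof (rule ccontr)
    assume "p' \<noteq> p"
    then have "TT n < \<bar>p' - p\<bar>" using PP_sep_strict p'(1) p(1) by blast
    then show False using \<open>x \<in> {p'..p' + TT n}\<close> p(2) by auto
  qed
  then show ?thesis using p' q by blast
qed

end

lemma covnum_le:
  fixes A :: "'a::metric_space set"
  assumes D: "finite D" and cov: "A \<subseteq> (\<Union>c\<in>D. cball c (r/2))"
  shows "covnum r A \<le> card D"
proof -
  define D' where "D' = {c\<in>D. cball c (r/2) \<inter> A \<noteq> {}}"
  define g where "g c = (SOME y. y \<in> cball c (r/2) \<inter> A)" for c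
  have g: "g c \<in> cball c (r/2) \<inter> A" if "c \<in> D'" for c
  proof -
    have "\<exists>y. y \<in> cball c (r/2) \<inter> A" using that unfolding D'_def by blast
    then show ?thesis unfolding g_def by (rule someI_ex)
  qed
  define G where "G = g ` D'"
  have finD': "finite D'" using D by (simp add: D'_def)
  have fin: "finite G" using finD' by (simp add: G_def)
  have sub: "G \<subseteq> A" using g by (auto simp: G_def)
  have cov2: "A \<subseteq> (\<Union>y\<in>G. cball y r)"
  proof
    fix z assume "z \<in> A"
    then obtain c where c: "c \<in> D" "z \<in> cball c (r/2)" using cov by blast
    then have "c \<in> D'" using \<open>z \<in> A\<close> unfolding D'_def by blast
    have "dist (g c) z \<le> dist (g c) c + dist c z" by (rule dist_triangle)
    also have "\<dots> \<le> r/2 + r/2" using g[OF \<open>c \<in> D'\<close>] c(2)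
      by (intro add_mono) (auto simp: dist_commute)
    finally have "dist (g c) z \<le> r" by simp
    moreover have "g c \<in> G" using \<open>c \<in> D'\<close> by (simp add: G_def)
    ultimately show "z \<in> (\<Union>y\<in>G. cball y r)" by auto
  qed
  have mem: "card G \<in> {card C | C. finite C \<and> C \<subseteq> A \<and> A \<subseteq> (\<Union>c\<in>C. cball c r)}"
    using fin sub cov2 by blast
  have bdd: "bdd_below {card C | C. finite C \<and> C \<subseteq> A \<and> A \<subseteq> (\<Union>c\<in>C. cball c r)}"
    by (rule bdd_belowI[of _ 0]) simp
  have "covnum r A \<le> card G"
    unfolding covnum_def by (rule cInf_lower[OF mem bdd])
  also have "card G \<le> card D'" unfolding G_def by (rule card_image_le[OF finD'])
  also have "card D' \<le> card D" using D by (intro card_mono) (auto simp: D'_def)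
  finally show ?thesis .
qed

lemma covnum_ge:
  fixes A :: "'a::metric_space set"
  assumes A: "compact A" and r: "r > 0" and P: "finite P" "P \<subseteq> A"
    and sep: "\<And>p q. p \<in> P \<Longrightarrow> q \<in> P \<Longrightarrow> p \<noteq> q \<Longrightarrow> 2*r < dist p q"
  shows "card P \<le> covnum r A"
proof -
  define S where "S = {card C | C. finite C \<and> C \<subseteq> A \<and> A \<subseteq> (\<Union>c\<in>C. cball c r)}"
  have cS: "covnum r A = Inf S" by (simp add: covnum_def S_def)
  have tb: "\<forall>e>0. \<exists>k. finite k \<and> k \<subseteq> A \<and> A \<subseteq> (\<Union>x\<in>k. ball x e)"
    by (rule seq_compact_imp_totally_bounded[OF compact_imp_seq_compact[OF A]])
  obtain k where k: "finite k" "k \<subseteq> A" "A \<subseteq> (\<Union>x\<in>k. ball x r)"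
    using tb[rule_format, OF r] by (elim exE conjE)
  have "(\<Union>x\<in>k. ball x r) \<subseteq> (\<Union>x\<in>k. cball x r)" by (intro UN_mono) auto
  then have kc: "A \<subseteq> (\<Union>x\<in>k. cball x r)" using k(3) by (rule subset_trans[rotated])
  have "card k \<in> S" unfolding S_def using k(1,2) kc by blast
  then have "S \<noteq> {}" by blast
  then have "Inf S \<in> S" by (rule Inf_nat_def1)
  then obtain C where C: "Inf S = card C" "finite C" "C \<subseteq> A" "A \<subseteq> (\<Union>c\<in>C. cball c r)"
    unfolding S_def by blast
  define f where "f p = (SOME c. c \<in> C \<and> p \<in> cball c r)" for p
  have f: "f p \<in> C \<and> p \<in> cball (f p) r" if "p \<in> P" for p
  proof -
    have "p \<in> A" using P(2) that by blast
    then have "\<exists>c. c \<in> C \<and> p \<in> cball c r" using C(4) by blast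
    then show ?thesis unfolding f_def by (rule someI_ex)
  qed
  have "inj_on f P"
  proof (rule inj_onI)
    fix p q assume pq: "p \<in> P" "q \<in> P" "f p = f q"
    show "p = q"
    proof (rule ccontr)
      assume "p \<noteq> q"
      then have "2*r < dist p q" using sep pq(1,2) by blast
      moreover have "dist p q \<le> dist p (f p) + dist (f p) q" by (rule dist_triangle)
      moreover have "dist p (f p) \<le> r" using f[OF pq(1)] by (simp add: dist_commute)
      moreover have "dist (f p) q \<le> r" using f[OF pq(2)] pq(3) by simp
      ultimately show False by linarith
    qed
  qed
  moreover have "f ` P \<subseteq> C" using f by blast
  ultimately have "card P \<le> card C" using C(2) by (intro card_inj_on_le)
  then show ?thesis using C(1) cS by simp
qed

definition Pann :: "'b::real_normed_vector set \<Rightarrow> bool" where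
  "Pann K \<longleftrightarrow> (\<forall>L\<ge>2. \<exists>c>0. \<forall>x\<in>K. \<forall>s. 0 < s \<and> s \<le> 1 \<longrightarrow>
      (\<exists>R. c * s \<le> R \<and> R \<le> s \<and> (\<forall>w\<in>K. \<not>(R/L < dist w x \<and> dist w x < R))))"

context cant begin

definition KK :: "'b::euclidean_space set" where "KK = {x. \<forall>i\<in>Basis. x \<bullet> i \<in> Cs}"

lemma zero_in_KK: "0 \<in> KK" using zero_in_Cs by (simp add: KK_def)

lemma compact_KK: "compact (KK :: 'b::euclidean_space set)"
proof -
  have "closed (KK :: 'b set)"
  proof -
    have "KK = (\<Inter>i\<in>Basis. (\<lambda>x::'b. x \<bullet> i) -` Cs)" by (auto simp: KK_def)
    moreover have "closed ((\<lambda>x::'b. x \<bullet> i) -` Cs)" for i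
      by (rule continuous_closed_vimage[OF closed_Cs]) (intro continuous_intros)
    ultimately show ?thesis by auto
  qed
  moreover have "bounded (KK :: 'b set)"
  proof -
    have "norm x \<le> real DIM('b)" if "x \<in> KK" for x :: 'b
    proof -
      have "norm x \<le> (\<Sum>i\<in>Basis. \<bar>x \<bullet> i\<bar>)" by (rule norm_le_l1)
      also have "\<dots> \<le> (\<Sum>i\<in>(Basis::'b set). 1)"
        using that Cs_01 by (intro sum_mono) (auto simp: KK_def)
      finally show ?thesis by simp
    qed
    then show ?thesis unfolding bounded_iff by blast
  qed
  ultimately show ?thesis by (simp add: compact_eq_bounded_closed)
qed

lemma annulus_KK:
  fixes x w :: "'b::euclidean_space"
  assumes "x \<in> KK" "w \<in> KK"
  shows "\<not> (real DIM('b) * TT (Suc j) < dist w x \<and> dist w x < kap * TT j)"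
proof
  assume H: "real DIM('b) * TT (Suc j) < dist w x \<and> dist w x < kap * TT j"
  have lev: "\<exists>p\<in>PP (Suc j). y \<in> {p..p + TT (Suc j)}" if "y \<in> Cs" for y
    using Cs_level that by blast
  show False
  proof (cases "\<exists>i\<in>Basis. \<exists>p\<in>PP (Suc j). \<exists>q\<in>PP (Suc j). p \<noteq> q \<and> x \<bullet> i \<in> {p..p + TT (Suc j)} \<and> w \<bullet> i \<in> {q..q + TT (Suc j)}")
    case True
    then obtain i p q where ipq: "i \<in> Basis" "p \<in> PP (Suc j)" "q \<in> PP (Suc j)" "p \<noteq> q"
      "x \<bullet> i \<in> {p..p + TT (Suc j)}" "w \<bullet> i \<in> {q..q + TT (Suc j)}" by blast
    have "kap * TT j \<le> \<bar>x \<bullet> i - w \<bullet> i\<bar>" using sep_points[OF ipq(2-6)] .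
    also have "\<dots> = \<bar>(w - x) \<bullet> i\<bar>" by (simp add: inner_diff_left)
    also have "\<dots> \<le> norm (w - x)" using Basis_le_norm[OF ipq(1)] by simp
    finally show False using H by (simp add: dist_norm)
  next
    case False
    have "\<bar>(w - x) \<bullet> i\<bar> \<le> TT (Suc j)" if i: "i \<in> Basis" for i
    proof -
      have "x \<bullet> i \<in> Cs" using assms(1) i unfolding KK_def by blast
      then obtain p where p: "p \<in> PP (Suc j)" "x \<bullet> i \<in> {p..p + TT (Suc j)}"
        using lev by blast
      have "w \<bullet> i \<in> Cs" using assms(2) i unfolding KK_def by blast
      then obtain q where q: "q \<in> PP (Suc j)" "w \<bullet> i \<in> {q..q + TT (Suc j)}"
        using lev by blast
      have "p = q"
      proof (rule ccontr)
        assume "p \<noteq> q"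
        then have "\<exists>i\<in>Basis. \<exists>p\<in>PP (Suc j). \<exists>q\<in>PP (Suc j). p \<noteq> q \<and> x \<bullet> i \<in> {p..p + TT (Suc j)} \<and> w \<bullet> i \<in> {q..q + TT (Suc j)}"
          using i p q by blast
        then show False using False by blast
      qed
      then show ?thesis using p q by (auto simp: inner_diff_left)
    qed
    then have "(\<Sum>i\<in>Basis. \<bar>(w - x) \<bullet> i\<bar>) \<le> (\<Sum>i\<in>(Basis::'b set). TT (Suc j))"
      by (intro sum_mono) auto
    then have "norm (w - x) \<le> (\<Sum>i\<in>(Basis::'b set). TT (Suc j))"
      using norm_le_l1[of "w - x"] by linarith
    then show False using H by (simp add: dist_norm)
  qed
qed

end

context cant begin

lemma rlow_nonneg[simp]: "0 \<le> rlow t" using rlow_pos[of t] by simp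
lemma kap_nonneg[simp]: "0 \<le> kap" using kap_pos by simp

lemma rlow_le1: "rlow t \<le> 1"
proof -
  have "0 \<le> cc * real t" using cc_pos by simp
  then have "-(ln 2 + cc * real t) \<le> 0" using ln2_pos by linarith
  then have "-(ln 2 + cc * real t)/a \<le> 0" using a0 by (intro divide_nonpos_pos) auto
  then show ?thesis by (simp add: rlow_def)
qed

lemma Pann_KK: "Pann (KK :: 'b::euclidean_space set)"
  unfolding Pann_def
proof (intro allI impI)
  fix L :: real assume L: "2 \<le> L"
  define D where "D = real DIM('b)"
  have D1: "1 \<le> D" by (simp add: D_def DIM_positive Suc_le_eq)
  define M where "M = L * D"
  have M2: "2 \<le> M" using L D1 unfolding M_def by (metis mult.right_neutral mult_mono order_trans le_numeral_extra(1) zero_le_numeral dual_order.trans)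
  have Mpos: "0 < M" using M2 by simp
  obtain t :: nat where t0: "1 + a * ln (M / kap) / cc \<le> real t" by (meson real_arch_simple)
  have t: "exp (- cc * (real t - 1) / a) \<le> kap / M"
  proof -
    have "a * ln (M / kap) / cc \<le> real t - 1" using t0 by simp
    then have "a * ln (M / kap) \<le> (real t - 1) * cc" using cc_pos by (simp add: divide_le_eq)
    then have "ln (M / kap) \<le> cc * (real t - 1) / a" using a0 by (simp add: le_divide_eq mult.commute)
    then have "- cc * (real t - 1) / a \<le> - ln (M / kap)" by simp
    also have "- ln (M / kap) = ln (kap / M)" using Mpos kap_pos by (simp add: ln_div)
    finally have "exp (- cc * (real t - 1) / a) \<le> exp (ln (kap / M))" by simp
    then show ?thesis using Mpos kap_pos by simp
  qed
  define c where "c = kap * rlow t ^ (2^t) / M"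
  have cpos: "0 < c" unfolding c_def using kap_pos rlow_pos Mpos by simp
  have c1: "c \<le> 1"
  proof -
    have "rlow t ^ (2^t) \<le> 1" using rlow_le1 rlow_pos by (simp add: power_le_one less_imp_le)
    moreover have "0 \<le> rlow t ^ (2^t)" using rlow_pos[of t] by simp
    ultimately have "kap * rlow t ^ (2^t) \<le> 1 * 1" using kap_le1 kap_pos
      by (intro mult_mono) auto
    then show ?thesis unfolding c_def using M2 by (simp add: divide_le_eq)
  qed
  show "\<exists>c>0. \<forall>x\<in>(KK :: 'b set). \<forall>s. 0 < s \<and> s \<le> 1 \<longrightarrow>
      (\<exists>R. c * s \<le> R \<and> R \<le> s \<and> (\<forall>w\<in>KK. \<not>(R/L < dist w x \<and> dist w x < R)))"
  proof (rule exI[of _ c], intro conjI cpos ballI allI impI)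
    fix x :: 'b and s :: real assume x: "x \<in> KK" and s: "0 < s \<and> s \<le> 1"
    have ex: "\<exists>n. M * TT (Suc n) \<le> s"
    proof -
      obtain n where "TT n < s / M" using TT_small[of "s/M"] s Mpos by auto
      then have "M * TT n \<le> s" using Mpos by (simp add: field_simps)
      moreover have "TT (Suc n) \<le> TT n" using TT_Suc_less[of n] by simp
      ultimately have "M * TT (Suc n) \<le> s" using Mpos
        by (meson mult_left_mono order_trans less_imp_le)
      then show ?thesis by blast
    qed
    define n1 where "n1 = (LEAST n. M * TT (Suc n) \<le> s)"
    have n1: "M * TT (Suc n1) \<le> s" unfolding n1_def by (rule LeastI_ex[OF ex])
    have TTn1: "s / M \<le> TT n1"
    proof (cases n1)
      case 0 then show ?thesis using s M2 by (simp add: divide_le_eq)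
    next
      case (Suc m)
      then have "m < n1" by simp
      then have "\<not> M * TT (Suc m) \<le> s" unfolding n1_def by (rule not_less_Least)
      then show ?thesis using Suc Mpos by (simp add: divide_le_eq mult.commute)
    qed
    define q where "q = n1 div 2^t"
    define rr where "rr = n1 mod 2^t"
    have n1eq: "n1 = 2^t * q + rr" unfolding q_def rr_def by simp
    have rr: "rr < 2^t" unfolding rr_def by simp
    define j where "j = 2^t * q + 2^t - 1"
    have Sj: "Suc j = 2^t * (q + 1)" unfolding j_def by (simp add: Suc_diff_le)
    have n1j: "n1 \<le> j" using n1eq rr unfolding j_def by simp
    have jn1: "j - n1 \<le> 2^t" using n1eq rr unfolding j_def by simp
    have good: "2^t dvd Suc j" using Sj by simp
    have notgood: "\<not> 2^t dvd Suc i" if "n1 \<le> i" "i < j" for i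
    proof
      assume "2^t dvd Suc i"
      then obtain v where v: "Suc i = 2^t * v" by blast
      have "2^t * q < Suc i" using that(1) n1eq by simp
      then have "2^t * q < 2^t * v" unfolding v .
      then have "q < v" by simp
      have "2^t * v < 2^t * (q + 1)" using v that Sj by simp
      then have "v < q + 1" by (rule mult_less_cancel1[THEN iffD1, THEN conjunct2])
      then show False using \<open>q < v\<close> by simp
    qed
    have chain: "n1 + w \<le> j \<Longrightarrow> rlow t ^ w * TT n1 \<le> TT (n1 + w)" for w
    proof (induction w)
      case 0 then show ?case by simp
    next
      case (Suc w)
      have "\<not> 2^t dvd Suc (n1 + w)" using notgood[of "n1 + w"] Suc.prems by simp
      then have "rlow t * TT (n1 + w) \<le> TT (Suc (n1 + w))" by (rule notgood_ratio)
      moreover have "rlow t * (rlow t ^ w * TT n1) \<le> rlow t * TT (n1 + w)"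
        using Suc.IH Suc.prems less_imp_le[OF rlow_pos[of t]] by (intro mult_left_mono) auto
      ultimately show ?case by simp
    qed
    have TTj: "rlow t ^ (2^t) * TT n1 \<le> TT j"
    proof -
      have "rlow t ^ (2^t) \<le> rlow t ^ (j - n1)"
        using jn1 rlow_pos rlow_le1 by (intro power_decreasing) (auto simp: less_imp_le)
      then have "rlow t ^ (2^t) * TT n1 \<le> rlow t ^ (j - n1) * TT n1"
        using TT_pos[of n1] by (intro mult_right_mono) auto
      also have "\<dots> \<le> TT (n1 + (j - n1))" using n1j by (intro chain) simp
      finally show ?thesis using n1j by simp
    qed
    define R where "R = min s (kap * TT j)"
    show "\<exists>R. c * s \<le> R \<and> R \<le> s \<and> (\<forall>w\<in>KK. \<not>(R/L < dist w x \<and> dist w x < R))"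
    proof -
      have "c * s \<le> s" using c1 s by (simp add: mult_le_cancel_right1)
      moreover have "c * s \<le> kap * TT j"
      proof -
        have "c * s = kap * rlow t ^ (2^t) * (s / M)" unfolding c_def by simp
        also have "\<dots> \<le> kap * rlow t ^ (2^t) * TT n1"
          using TTn1 kap_pos rlow_pos by (intro mult_left_mono) auto
        also have "\<dots> \<le> kap * TT j" using TTj kap_pos by (simp add: mult.assoc)
        finally show ?thesis .
      qed
      ultimately have A1: "c * s \<le> R" unfolding R_def by simp
      have A2: "R \<le> s" unfolding R_def by simp
      have A3: "\<not> (R / L < dist w x \<and> dist w x < R)" if w: "w \<in> KK" for w :: 'b
      proof -
      have a1': "D * TT (Suc j) \<le> s / L"
      proof -
        have "TT (Suc j) \<le> TT (Suc n1)" using n1j by (intro TT_anti) simp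
        then have "M * TT (Suc j) \<le> s" using n1 Mpos by (meson mult_left_mono order_trans less_imp_le)
        then show ?thesis using L unfolding M_def by (simp add: le_divide_eq mult.commute mult.left_commute)
      qed
      have a2: "D * TT (Suc j) \<le> kap * TT j / L"
      proof -
        have "TT (Suc j) \<le> exp (- cc * (real t - 1) / a) * TT j" using good by (rule good_ratio)
        also have "\<dots> \<le> kap / M * TT j" using t TT_pos[of j] by (intro mult_right_mono) auto
        finally have "M * TT (Suc j) \<le> kap * TT j" using Mpos by (simp add: field_simps)
        then show ?thesis using L unfolding M_def by (simp add: le_divide_eq mult.commute mult.left_commute)
      qed
      have "D * TT (Suc j) \<le> R / L" using a1' a2 unfolding R_def by (simp add: min_def)
      moreover have "\<not> (D * TT (Suc j) < dist w x \<and> dist w x < kap * TT j)"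
        using annulus_KK[OF x w, of j] unfolding D_def .
      ultimately show "\<not> (R / L < dist w x \<and> dist w x < R)" unfolding R_def by auto
      qed
      show ?thesis using A1 A2 A3 by blast
    qed
  qed
qed

end

lemma coord_sum:
  fixes g :: "'b::euclidean_space \<Rightarrow> real"
  assumes "i \<in> Basis"
  shows "(\<Sum>j\<in>Basis. g j *\<^sub>R j) \<bullet> i = g i"
proof -
  have "(\<Sum>j\<in>Basis. g j *\<^sub>R j) \<bullet> i = (\<Sum>j\<in>Basis. (j \<bullet> i) * g j)"
    by (simp add: inner_sum_left mult.commute)
  also have "\<dots> = g i" using assms by (rule sum_inner_Basis_eq)
  finally show ?thesis .
qed

context cant begin

lemma cover_KK:
  fixes x :: "'b::euclidean_space"
  assumes x: "x \<in> KK" and N: "N = 0 \<or> R < kap * TT (N - 1)"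
    and r: "real DIM('b) * TT (N + m) \<le> r"
  shows "covnum r (cball x R \<inter> KK) \<le> 2 ^ (m * DIM('b))"
proof -
  have "\<forall>i\<in>(Basis::'b set). \<exists>p\<in>PP N. x \<bullet> i \<in> {p..p + TT N}"
    using x Cs_level unfolding KK_def by blast
  then obtain p where p: "\<And>i. i \<in> (Basis::'b set) \<Longrightarrow> p i \<in> PP N \<and> x \<bullet> i \<in> {p i..p i + TT N}"
    by metis
  define Q where "Q i = QQ (p i) N m" for i :: 'b
  define Pi where "Pi = PiE (Basis::'b set) Q"
  define h where "h = TT (N + m)"
  define ctr where "ctr f = (\<Sum>j\<in>(Basis::'b set). (f j + h/2) *\<^sub>R j)" for f :: "'b \<Rightarrow> real"
  have finPi: "finite Pi" unfolding Pi_def Q_def by (intro finite_PiE) (auto simp: QQ_finite)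
  have cardPi: "card Pi \<le> 2 ^ (m * DIM('b))"
  proof -
    have "card Pi = (\<Prod>i\<in>(Basis::'b set). card (Q i))" unfolding Pi_def by (simp add: card_PiE)
    also have "\<dots> \<le> (\<Prod>i\<in>(Basis::'b set). 2 ^ m)"
      unfolding Q_def by (intro prod_mono) (auto simp: card_QQ_le)
    also have "\<dots> = 2 ^ (m * DIM('b))" by (simp add: power_mult)
    finally show ?thesis .
  qed
  have cov: "cball x R \<inter> KK \<subseteq> (\<Union>c\<in>ctr ` Pi. cball c (r/2))"
  proof
    fix z assume z: "z \<in> cball x R \<inter> KK"
    have zi: "\<exists>q\<in>Q i. z \<bullet> i \<in> {q..q + h}" if i: "i \<in> Basis" for i
    proof -
      have zC: "z \<bullet> i \<in> Cs" using z i unfolding KK_def by blast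
      then obtain p' where p': "p' \<in> PP N" "z \<bullet> i \<in> {p'..p' + TT N}" using Cs_level by blast
      have "p' = p i"
      proof (rule ccontr)
        assume ne: "p' \<noteq> p i"
        show False
        proof (cases N)
          case 0 then show False using ne p' p[OF i] by simp
        next
          case (Suc N')
          have "kap * TT N' \<le> \<bar>x \<bullet> i - z \<bullet> i\<bar>"
            using sep_points[of "p i" N' p' "x \<bullet> i" "z \<bullet> i"] p[OF i] p' ne Suc by auto
          also have "\<dots> = \<bar>(x - z) \<bullet> i\<bar>" by (simp add: inner_diff_left)
          also have "\<dots> \<le> norm (x - z)" using Basis_le_norm[OF i] by simp
          also have "\<dots> \<le> R" using z by (simp add: dist_norm)
          finally show False using N Suc by simp
        qed
      qed
      then show ?thesis using Cs_QQ[OF zC, of "p i" N m] p[OF i] p' unfolding Q_def h_def by simp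
    qed
    define f where "f = restrict (\<lambda>i. SOME q. q \<in> Q i \<and> z \<bullet> i \<in> {q..q + h}) (Basis::'b set)"
    have f: "f i \<in> Q i \<and> z \<bullet> i \<in> {f i..f i + h}" if i: "i \<in> Basis" for i
      using someI_ex[OF zi[OF i, unfolded Bex_def]] i unfolding f_def by simp
    have fPi: "f \<in> Pi" unfolding Pi_def using f by (auto simp: f_def)
    have "dist z (ctr f) \<le> r/2"
    proof -
      have "\<bar>(z - ctr f) \<bullet> i\<bar> \<le> h/2" if i: "i \<in> Basis" for i
      proof -
        have "(ctr f) \<bullet> i = f i + h/2" unfolding ctr_def by (rule coord_sum[OF i])
        then have "\<bar>(z - ctr f) \<bullet> i\<bar> = \<bar>z \<bullet> i - (f i + h/2)\<bar>" by (simp add: inner_diff_left)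
        also have "\<dots> \<le> h/2" using f[OF i] by (intro abs_leI) auto
        finally show ?thesis .
      qed
      then have "(\<Sum>i\<in>Basis. \<bar>(z - ctr f) \<bullet> i\<bar>) \<le> (\<Sum>i\<in>(Basis::'b set). h/2)"
        by (intro sum_mono) auto
      then have "norm (z - ctr f) \<le> real DIM('b) * h / 2"
        using norm_le_l1[of "z - ctr f"] by simp
      also have "\<dots> \<le> r/2" using r unfolding h_def by simp
      finally show ?thesis by (simp add: dist_norm)
    qed
    then show "z \<in> (\<Union>c\<in>ctr ` Pi. cball c (r/2))" using fPi by (auto simp: dist_commute)
  qed
  have "covnum r (cball x R \<inter> KK) \<le> card (ctr ` Pi)"
    by (rule covnum_le[OF finite_imageI[OF finPi] cov])
  also have "\<dots> \<le> card Pi" by (rule card_image_le[OF finPi])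
  finally show ?thesis using cardPi by linarith
qed

end

lemma bs_lin: "\<epsilon> > 0 \<Longrightarrow> \<exists>M. \<forall>w. real (bs w) \<le> M + \<epsilon> * real w"
proof -
  assume e: "\<epsilon> > 0"
  define \<eta> where "\<eta> = \<epsilon> * ln 2"
  have eta: "\<eta> > 0" using e by (simp add: \<eta>_def)
  have l2: "ln (2::real) > 0" by simp
  show ?thesis
  proof (intro exI allI)
    fix w :: nat
    have "(2::real) ^ bs w \<le> real w + 1" using bs_pow[of w]
      by (metis of_nat_1 of_nat_add of_nat_le_iff of_nat_numeral of_nat_power)
    then have "ln ((2::real) ^ bs w) \<le> ln (real w + 1)" by simp
    then have 1: "real (bs w) * ln 2 \<le> ln (real w + 1)" by (simp add: ln_realpow)
    have "ln (\<eta> * (real w + 1)) \<le> \<eta> * (real w + 1) - 1" using eta by (intro ln_le_minus_one) simp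
    then have 2: "ln \<eta> + ln (real w + 1) \<le> \<eta> * (real w + 1) - 1" using eta by (simp add: ln_mult)
    from 1 2 have "real (bs w) * ln 2 \<le> \<epsilon> * ln 2 * (real w + 1) - 1 - ln \<eta>" unfolding \<eta>_def by linarith
    then have "real (bs w) \<le> (\<epsilon> * ln 2 * (real w + 1) - 1 - ln \<eta>) / ln 2" using l2 by (simp add: le_divide_eq)
    also have "\<dots> = (\<epsilon> - (1 + ln \<eta>) / ln 2) + \<epsilon> * real w" using l2 by (simp add: field_simps)
    finally show "real (bs w) \<le> (\<epsilon> - (1 + ln \<eta>) / ln 2) + \<epsilon> * real w" .
  qed
qed

context cant begin

lemma win_upper: "real ((2::nat) ^ w) \<le> (TT N / TT (N + w)) powr a * exp (cc * real (bs w))"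
proof -
  have "real ((2::nat) ^ w) = 2 ^ ((N + w) - N)" by simp
  also have "\<dots> = (TT N / TT (N + w)) powr a * exp (cc*(real (bs (N + w)) - real (bs N)))"
    by (rule window) simp
  also have "\<dots> \<le> (TT N / TT (N + w)) powr a * exp (cc * real (bs w))"
  proof -
    have "real (bs (N + w)) \<le> real (bs N) + real (bs w)" using bs_add[of N w] by linarith
    then have "cc*(real (bs (N + w)) - real (bs N)) \<le> cc * real (bs w)" using cc_pos
      by (simp add: mult_left_mono)
    then show ?thesis by (intro mult_left_mono) auto
  qed
  finally show ?thesis .
qed

lemma win_lower: "(TT N / TT (N + w)) powr a * exp (- cc * real (bs N)) \<le> real ((2::nat) ^ w)"
proof -
  have "(TT N / TT (N + w)) powr a * exp (- cc * real (bs N))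
      \<le> (TT N / TT (N + w)) powr a * exp (cc*(real (bs (N + w)) - real (bs N)))"
    using cc_pos by (intro mult_left_mono) (auto simp: algebra_simps)
  also have "\<dots> = 2 ^ ((N + w) - N)" by (rule window[symmetric]) simp
  finally show ?thesis by simp
qed

lemma assouad_upper:
  assumes \<beta>: "a * real DIM('b::euclidean_space) < \<beta>"
  shows "\<exists>C>0. \<forall>r R x. 0 < r \<and> r \<le> R \<and> R < 1 \<and> x \<in> (KK::'b set) \<longrightarrow>
           real (covnum r (cball x R \<inter> KK)) \<le> C * (R / r) powr \<beta>"
proof -
  define d where "d = DIM('b)"
  define D where "D = real d"
  have D1: "1 \<le> D" by (simp add: D_def d_def DIM_positive Suc_le_eq)
  have aD: "0 < a * D" using a0 D1 by simp
  define \<gamma> where "\<gamma> = \<beta> - a * D"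
  have g: "\<gamma> > 0" using \<beta> unfolding \<gamma>_def D_def d_def by simp
  define \<epsilon> where "\<epsilon> = lam * \<gamma> / (cc * D)"
  have e: "\<epsilon> > 0" unfolding \<epsilon>_def using lam_pos g cc_pos D1 by simp
  obtain Mb where Mb: "\<And>w. real (bs w) \<le> Mb + \<epsilon> * real w" using bs_lin[OF e] by blast
  define K0 where "K0 = 2 ^ d * exp (cc * D * Mb)"
  define C where "C = max 1 (K0 * (D / kap) powr \<beta>)"
  have Cpos: "C > 0" unfolding C_def by simp
  show ?thesis
  proof (rule exI[of _ C], intro conjI Cpos allI impI)
    fix r R :: real and x :: 'b
    assume H: "0 < r \<and> r \<le> R \<and> R < 1 \<and> x \<in> KK"
    then have r: "0 < r" and rR: "r \<le> R" and x: "x \<in> KK" by auto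
    have Rpos: "0 < R" using r rR by simp
    have Rr1: "1 \<le> R / r" using r rR by simp
    have exN: "\<exists>N. kap * TT N \<le> R"
    proof -
      obtain n where "TT n < R / kap" using TT_small[of "R/kap"] Rpos kap_pos by auto
      then show ?thesis using kap_pos by (intro exI[of _ n]) (simp add: field_simps)
    qed
    define N where "N = (LEAST N. kap * TT N \<le> R)"
    have hN: "kap * TT N \<le> R" unfolding N_def by (rule LeastI_ex[OF exN])
    have Nprop: "N = 0 \<or> R < kap * TT (N - 1)"
    proof (cases N)
      case (Suc N')
      then have "N' < N" by simp
      then have "\<not> kap * TT N' \<le> R" unfolding N_def by (rule not_less_Least)
      then show ?thesis using Suc by simp
    qed simp
    have exm: "\<exists>m. D * TT (N + m) \<le> r"
    proof -
      obtain n where n: "TT n < r / D" using TT_small[of "r/D"] r D1 by auto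
      have "TT (N + n) \<le> TT n" by (intro TT_anti) simp
      then have "D * TT (N + n) \<le> D * TT n" using D1 by (intro mult_left_mono) auto
      moreover have "D * TT n < r" using n D1 by (simp add: field_simps)
      ultimately have "D * TT (N + n) \<le> r" by simp
      then show ?thesis by blast
    qed
    define m where "m = (LEAST m. D * TT (N + m) \<le> r)"
    have hm: "D * TT (N + m) \<le> r" unfolding m_def by (rule LeastI_ex[OF exm])
    have cov: "covnum r (cball x R \<inter> KK) \<le> 2 ^ (m * d)"
      unfolding d_def by (rule cover_KK[OF x Nprop]) (use hm in \<open>simp add: D_def d_def\<close>)
    then have cov': "real (covnum r (cball x R \<inter> KK)) \<le> 2 ^ (m * d)"
      by (metis of_nat_le_iff of_nat_numeral of_nat_power)
    have powge1: "1 \<le> (R / r) powr \<beta>" using Rr1 aD g unfolding \<gamma>_def by (intro ge_one_powr_ge_zero) auto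
    show "real (covnum r (cball x R \<inter> KK)) \<le> C * (R / r) powr \<beta>"
    proof (cases m)
      case 0
      have "real (covnum r (cball x R \<inter> KK)) \<le> 1" using cov' 0 by simp
      also have "1 \<le> C * (R / r) powr \<beta>" using powge1 unfolding C_def
        by (metis max.cobounded1 mult_mono' mult_1 zero_le_one order_trans)
      finally show ?thesis .
    next
      case (Suc w)
      have hw: "r < D * TT (N + w)"
      proof -
        have "w < m" using Suc by simp
        then have "\<not> D * TT (N + w) \<le> r" unfolding m_def by (rule not_less_Least)
        then show ?thesis by simp
      qed
      define X where "X = TT N / TT (N + w)"
      have Xpos: "X > 0" unfolding X_def using TT_pos by simp
      have Xlow: "exp (lam * real w) \<le> X" unfolding X_def using ratio_lower[of N "N + w"] by simp
      have w1: "real ((2::nat) ^ w) \<le> X powr a * exp (cc * real (bs w))"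
        unfolding X_def by (rule win_upper)
      have "(2::real) ^ (m * d) = 2 ^ d * (real ((2::nat) ^ w)) ^ d"
        using Suc by (simp add: power_add power_mult[symmetric] mult.commute)
      also have "\<dots> \<le> 2 ^ d * (X powr a * exp (cc * real (bs w))) ^ d"
        using w1 by (intro mult_left_mono power_mono) auto
      also have "(X powr a * exp (cc * real (bs w))) ^ d = X powr (a * D) * exp (cc * D * real (bs w))"
      proof -
        have "(X powr a) ^ d = X powr (a * D)" using Xpos by (simp add: powr_power D_def mult.commute)
        moreover have "(exp (cc * real (bs w))) ^ d = exp (cc * D * real (bs w))"
          by (simp add: exp_of_nat_mult[symmetric] D_def mult.assoc mult.left_commute)
        ultimately show ?thesis by (simp add: power_mult_distrib)
      qed
      also have "exp (cc * D * real (bs w)) \<le> exp (cc * D * Mb) * X powr \<gamma>"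
      proof -
        have "cc * D * real (bs w) \<le> cc * D * (Mb + \<epsilon> * real w)"
          using Mb[of w] cc_pos D1 by (intro mult_left_mono) auto
        also have "\<dots> = cc * D * Mb + lam * real w * \<gamma>" unfolding \<epsilon>_def using cc_pos D1 by (simp add: field_simps)
        finally have "exp (cc * D * real (bs w)) \<le> exp (cc * D * Mb) * exp (lam * real w * \<gamma>)"
          by (simp add: exp_add[symmetric])
        also have "exp (lam * real w * \<gamma>) = exp (lam * real w) powr \<gamma>" by (simp add: exp_powr_real)
        also have "\<dots> \<le> X powr \<gamma>" using Xlow g by (intro powr_mono2) auto
        finally show ?thesis by simp
      qed
      finally have A: "(2::real) ^ (m * d) \<le> 2 ^ d * (X powr (a * D) * (exp (cc * D * Mb) * X powr \<gamma>))"
        by (simp add: mult_left_mono)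
      have XX: "X powr (a * D) * X powr \<gamma> = X powr \<beta>" unfolding \<gamma>_def by (simp add: powr_add[symmetric])
      have eqB: "2 ^ d * (X powr (a * D) * (exp (cc * D * Mb) * X powr \<gamma>)) = K0 * (X powr (a * D) * X powr \<gamma>)"
        unfolding K0_def by (simp add: algebra_simps)
      have B: "(2::real) ^ (m * d) \<le> K0 * X powr \<beta>" using A unfolding eqB XX .
      have "X \<le> (R / kap) / (r / D)" unfolding X_def
        using hN hw kap_pos D1 r TT_pos Rpos by (intro frac_le) (auto simp: field_simps)
      also have "\<dots> = (D / kap) * (R / r)" using kap_pos D1 r by (simp add: field_simps)
      finally have "X powr \<beta> \<le> ((D / kap) * (R / r)) powr \<beta>" using Xpos aD g unfolding \<gamma>_def
        by (intro powr_mono2) auto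
      also have "\<dots> = (D / kap) powr \<beta> * (R / r) powr \<beta>" by (rule powr_mult)
      finally have "K0 * X powr \<beta> \<le> K0 * ((D / kap) powr \<beta> * (R / r) powr \<beta>)"
        unfolding K0_def by (intro mult_left_mono) auto
      also have "\<dots> \<le> C * (R / r) powr \<beta>" unfolding C_def
        by (simp add: mult.assoc[symmetric] mult_right_mono)
      finally show ?thesis using B cov' by linarith
    qed
  qed
qed

end

context cant begin

lemma assouad_lower:
  assumes \<beta>: "\<beta> < a * real DIM('b::euclidean_space)" and C: "C > 0"
    and HH: "\<forall>r R x. 0 < r \<and> r \<le> R \<and> R < 1 \<and> x \<in> (KK::'b set) \<longrightarrow>
           real (covnum r (cball x R \<inter> KK)) \<le> C * (R / r) powr \<beta>"
  shows False
proof -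
  define d where "d = DIM('b)"
  define D where "D = real d"
  have D1: "1 \<le> D" by (simp add: D_def d_def DIM_positive Suc_le_eq)
  define \<gamma> where "\<gamma> = a * D - \<beta>"
  have g: "\<gamma> > 0" using \<beta> unfolding \<gamma>_def D_def d_def by simp
  obtain n0 where n0: "TT n0 < 1 / D" using TT_small[of "1/D"] D1 by auto
  define R where "R = D * TT n0"
  have R1: "R < 1" using n0 D1 unfolding R_def by (simp add: field_simps)
  have Rpos: "R > 0" unfolding R_def using D1 TT_pos by simp
  define B where "B = C * (3 * D / kap) powr \<beta> * exp (cc * D * real (bs n0))"
  have Bpos: "B > 0" unfolding B_def using C kap_pos D1 by simp
  obtain w :: nat where w0: "ln B / (lam * \<gamma>) < real w" using reals_Archimedean2 by blast
  have wB: "B < exp (lam * real w * \<gamma>)"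
  proof -
    have "ln B < lam * real w * \<gamma>" using w0 lam_pos g by (simp add: divide_less_eq mult.commute mult.left_commute)
    then have "exp (ln B) < exp (lam * real w * \<gamma>)" by simp
    then show ?thesis using Bpos by simp
  qed
  define m where "m = Suc w"
  define r where "r = kap * TT (n0 + w) / 3"
  have rpos: "r > 0" unfolding r_def using kap_pos TT_pos by simp
  have rR: "r \<le> R"
  proof -
    have "r \<le> TT (n0 + w)" unfolding r_def using kap_le1 TT_pos[of "n0+w"]
      by (simp add: mult_le_cancel_right1 divide_le_eq)
    also have "\<dots> \<le> TT n0" by (intro TT_anti) simp
    also have "\<dots> \<le> R" unfolding R_def using D1 TT_pos[of n0] by (simp add: mult_le_cancel_right1)
    finally show ?thesis .
  qed
  have z0: "0 \<in> PP n0" using PP_mono[of 0 n0] by auto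
  define Q where "Q = QQ 0 n0 m"
  have cardQ: "card Q = 2 ^ m" unfolding Q_def by (rule card_QQ[OF z0])
  have QP: "Q \<subseteq> PP (Suc (n0 + w))" unfolding Q_def m_def using PP_QQ[of n0 "Suc w"] z0 by auto
  have Qb: "0 \<le> q \<and> q \<le> TT n0" if "q \<in> Q" for q
    using QQ_sub[of q 0 n0 m] that TT_pos[of "n0 + m"] unfolding Q_def by auto
  define Pi where "Pi = PiE (Basis::'b set) (\<lambda>_. Q)"
  define z where "z f = (\<Sum>j\<in>(Basis::'b set). f j *\<^sub>R j)" for f :: "'b \<Rightarrow> real"
  have zc: "z f \<bullet> i = f i" if "i \<in> Basis" for f i unfolding z_def by (rule coord_sum[OF that])
  have finPi: "finite Pi" unfolding Pi_def Q_def by (intro finite_PiE) (auto simp: QQ_finite)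
  have cardPi: "card Pi = (2 ^ m) ^ d" unfolding Pi_def d_def by (simp add: card_PiE cardQ)
  have inj: "inj_on z Pi"
  proof (rule inj_onI)
    fix f g assume fg: "f \<in> Pi" "g \<in> Pi" "z f = z g"
    show "f = g"
    proof (rule PiE_ext[OF fg(1)[unfolded Pi_def] fg(2)[unfolded Pi_def]])
      fix i :: 'b assume "i \<in> Basis"
      then show "f i = g i" using zc[of i f] zc[of i g] fg(3) by simp
    qed
  qed
  have sub: "z ` Pi \<subseteq> cball 0 R \<inter> KK"
  proof
    fix y assume "y \<in> z ` Pi"
    then obtain f where f: "f \<in> Pi" "y = z f" by blast
    have fi: "f i \<in> Q" if "i \<in> Basis" for i using f(1) that unfolding Pi_def by auto
    have "y \<in> KK" unfolding KK_def
    proof (intro CollectI ballI)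
      fix i :: 'b assume i: "i \<in> Basis"
      then have "y \<bullet> i = f i" using f zc by simp
      then show "y \<bullet> i \<in> Cs" using PP_in_Cs[OF subsetD[OF QP fi[OF i]]] by simp
    qed
    moreover have "norm y \<le> R"
    proof -
      have "norm y \<le> (\<Sum>i\<in>Basis. \<bar>y \<bullet> i\<bar>)" by (rule norm_le_l1)
      also have "\<dots> \<le> (\<Sum>i\<in>(Basis::'b set). TT n0)"
      proof (intro sum_mono)
        fix i :: 'b assume i: "i \<in> Basis"
        then show "\<bar>y \<bullet> i\<bar> \<le> TT n0" using f zc[OF i, of f] Qb[OF fi[OF i]] by simp
      qed
      finally show ?thesis unfolding R_def D_def d_def by simp
    qed
    ultimately show "y \<in> cball 0 R \<inter> KK" by simp
  qed
  have sep: "2 * r < dist p q" if pq: "p \<in> z ` Pi" "q \<in> z ` Pi" "p \<noteq> q" for p q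
  proof -
    obtain f where f: "f \<in> Pi" "p = z f" using pq(1) by blast
    obtain g where g: "g \<in> Pi" "q = z g" using pq(2) by blast
    have "f \<noteq> g" using f g pq(3) by blast
    then obtain i where i: "i \<in> Basis" "f i \<noteq> g i"
      using PiE_ext[of f Basis "\<lambda>_. Q" g] f(1) g(1) unfolding Pi_def by blast
    have "f i \<in> PP (Suc (n0 + w))" "g i \<in> PP (Suc (n0 + w))"
      using f(1) g(1) i(1) QP unfolding Pi_def by auto
    then have "TT (Suc (n0 + w)) + kap * TT (n0 + w) \<le> \<bar>f i - g i\<bar>" using PP_sep i(2) by blast
    moreover have "\<bar>f i - g i\<bar> = \<bar>(p - q) \<bullet> i\<bar>" using f g zc[OF i(1)] by (simp add: inner_diff_left)
    moreover have "\<bar>(p - q) \<bullet> i\<bar> \<le> dist p q" using Basis_le_norm[OF i(1)] by (simp add: dist_norm)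
    moreover have "2 * r < kap * TT (n0 + w)" unfolding r_def using kap_pos TT_pos[of "n0+w"] by simp
    moreover have "0 < TT (Suc (n0 + w))" by (rule TT_pos)
    ultimately show ?thesis by linarith
  qed
  have cpt: "compact (cball 0 R \<inter> (KK::'b set))"
    using compact_KK by (intro compact_Int compact_cball)
  have "card (z ` Pi) \<le> covnum r (cball 0 R \<inter> (KK::'b set))"
    by (rule covnum_ge[OF cpt rpos finite_imageI[OF finPi] sub sep])
  moreover have "card (z ` Pi) = (2 ^ m) ^ d" using card_image[OF inj] cardPi by simp
  ultimately have "real ((2 ^ m) ^ d) \<le> real (covnum r (cball 0 R \<inter> (KK::'b set)))" by linarith
  also have "\<dots> \<le> C * (R / r) powr \<beta>" using HH rpos rR R1 zero_in_KK by blast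
  finally have main: "real ((2 ^ m) ^ d) \<le> C * (R / r) powr \<beta>" .
  define X where "X = TT n0 / TT (n0 + w)"
  have Xpos: "X > 0" unfolding X_def using TT_pos by simp
  have Xlow: "exp (lam * real w) \<le> X" unfolding X_def using ratio_lower[of n0 "n0 + w"] by simp
  have "X powr (a * D) * exp (- cc * D * real (bs n0)) = (X powr a * exp (- cc * real (bs n0))) ^ d"
  proof -
    have "(X powr a) ^ d = X powr (a * D)" using Xpos by (simp add: powr_power D_def mult.commute)
    moreover have "(exp (- cc * real (bs n0))) ^ d = exp (- cc * D * real (bs n0))"
      by (simp add: exp_of_nat_mult[symmetric] D_def mult.assoc mult.left_commute)
    ultimately show ?thesis by (simp add: power_mult_distrib)
  qed
  also have "\<dots> \<le> (real ((2::nat) ^ w)) ^ d"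
    using win_lower[of n0 w] Xpos unfolding X_def by (intro power_mono) auto
  also have "\<dots> \<le> real ((2 ^ m) ^ d)" unfolding m_def by (simp add: power_mono)
  also have "\<dots> \<le> C * (R / r) powr \<beta>" by (rule main)
  also have "R / r = (3 * D / kap) * X" unfolding R_def r_def X_def using kap_pos TT_pos[of "n0 + w"]
    by (simp add: field_simps)
  also have "C * ((3 * D / kap) * X) powr \<beta> = C * (3 * D / kap) powr \<beta> * X powr \<beta>"
    by (subst powr_mult) (simp only: mult.assoc)
  finally have A: "X powr (a * D) * exp (- cc * D * real (bs n0)) \<le> C * (3 * D / kap) powr \<beta> * X powr \<beta>" .
  have "X powr (a * D) = X powr \<beta> * X powr \<gamma>" unfolding \<gamma>_def by (simp add: powr_add[symmetric])
  then have "X powr \<beta> * (X powr \<gamma> * exp (- cc * D * real (bs n0))) \<le> X powr \<beta> * (C * (3 * D / kap) powr \<beta>)"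
    using A by (simp add: algebra_simps)
  then have "X powr \<gamma> * exp (- cc * D * real (bs n0)) \<le> C * (3 * D / kap) powr \<beta>"
    using Xpos by (simp add: mult_le_cancel_left_pos)
  then have "X powr \<gamma> \<le> B" unfolding B_def
    by (simp add: exp_minus field_simps)
  moreover have "exp (lam * real w * \<gamma>) \<le> X powr \<gamma>"
  proof -
    have "exp (lam * real w * \<gamma>) = exp (lam * real w) powr \<gamma>" by (simp add: exp_powr_real)
    also have "\<dots> \<le> X powr \<gamma>" using Xlow g by (intro powr_mono2) auto
    finally show ?thesis .
  qed
  ultimately show False using wB by linarith
qed

end

lemma hd_approx:
  fixes E :: "'a::real_normed_vector set"
  assumes E: "compact E" and Sne: "\<And>n. S n \<noteq> {}"
    and hd: "(\<lambda>n. hausdorff_dist (S n) E) \<longlonglongrightarrow> 0" and y: "y \<in> E"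
  shows "\<exists>yn. (\<forall>n. yn n \<in> S n) \<and> yn \<longlonglongrightarrow> y"
proof -
  have le: "infdist y (S n) \<le> hausdorff_dist (S n) E" for n
  proof -
    obtain s0 where s0: "s0 \<in> S n" using Sne[of n] by blast
    have "\<exists>e. \<forall>b\<in>E. dist s0 b \<le> e"
      using compact_imp_bounded[OF E] by (rule bounded_any_center[THEN iffD1])
    then obtain e where e: "\<forall>b\<in>E. dist s0 b \<le> e" by (elim exE)
    have "bdd_above ((\<lambda>b. infdist b (S n)) ` E)"
    proof (rule bdd_aboveI2)
      fix b assume "b \<in> E"
      have "infdist b (S n) \<le> dist b s0" by (rule infdist_le[OF s0])
      also have "\<dots> \<le> e" using e \<open>b \<in> E\<close> by (simp add: dist_commute)
      finally show "infdist b (S n) \<le> e" .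
    qed
    then have "infdist y (S n) \<le> (SUP b\<in>E. infdist b (S n))" using y by (rule cSUP_upper2) simp
    then show ?thesis unfolding hausdorff_dist_def by simp
  qed
  have ev1: "\<forall>\<^sub>F n in sequentially. 0 \<le> infdist y (S n)" by (simp add: infdist_nonneg)
  have ev2: "\<forall>\<^sub>F n in sequentially. infdist y (S n) \<le> hausdorff_dist (S n) E" using le by simp
  have idt: "(\<lambda>n. infdist y (S n)) \<longlonglongrightarrow> 0"
    by (rule tendsto_sandwich[OF ev1 ev2 tendsto_const hd])
  have ex: "\<exists>a. a \<in> S n \<and> dist y a < infdist y (S n) + 1 / real (Suc n)" for n
  proof -
    have "Inf ((\<lambda>a. dist y a) ` S n) < infdist y (S n) + 1 / real (Suc n)"
      using infdist_notempty[OF Sne[of n], of y] by simp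
    then have "\<exists>d\<in>(\<lambda>a. dist y a) ` S n. d < infdist y (S n) + 1 / real (Suc n)"
      by (rule cInf_lessD[rotated]) (use Sne[of n] in simp)
    then show ?thesis by auto
  qed
  define yn where "yn n = (SOME a. a \<in> S n \<and> dist y a < infdist y (S n) + 1 / real (Suc n))" for n
  have yn: "yn n \<in> S n \<and> dist y (yn n) < infdist y (S n) + 1 / real (Suc n)" for n
    unfolding yn_def by (rule someI_ex[OF ex])
  have lim2: "(\<lambda>n. infdist y (S n) + 1 / real (Suc n)) \<longlonglongrightarrow> 0 + 0"
    by (intro tendsto_add idt) (use LIMSEQ_inverse_real_of_nat in \<open>simp add: inverse_eq_divide\<close>)
  have ev3: "\<forall>\<^sub>F n in sequentially. 0 \<le> dist (yn n) y" by simp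
  have "dist (yn n) y \<le> infdist y (S n) + 1 / real (Suc n)" for n
    using yn[of n] dist_commute[of "yn n" y] by linarith
  then have ev4: "\<forall>\<^sub>F n in sequentially. dist (yn n) y \<le> infdist y (S n) + 1 / real (Suc n)"
    by simp
  have "(\<lambda>n. dist (yn n) y) \<longlonglongrightarrow> 0"
    using tendsto_sandwich[OF ev3 ev4 tendsto_const] lim2 by simp
  then have "yn \<longlonglongrightarrow> y" by (rule tendsto_dist_iff[THEN iffD2])
  then show ?thesis using yn by blast
qed

lemma micro_annulus:
  fixes K :: "'a::real_normed_vector set"
  assumes P: "Pann K" and E: "E \<in> microsets K" and y: "y \<in> E" and L: "2 \<le> L"
  shows "\<exists>R>0. R \<le> 1/2 \<and> (\<forall>w\<in>E. \<not>(R/L < dist w y \<and> dist w y < R))"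
proof -
  have "compact E \<and> E \<noteq> {} \<and> (\<exists>S. (\<forall>n. S n \<in> minisets K) \<and> (\<lambda>n. hausdorff_dist (S n) E) \<longlonglongrightarrow> 0)"
    using E unfolding microsets_def by simp
  then obtain S where cE: "compact E" and S: "\<forall>n. S n \<in> minisets K"
    and hd: "(\<lambda>n. hausdorff_dist (S n) E) \<longlonglongrightarrow> 0"
    by (elim exE conjE)
  have "\<forall>n. \<exists>xt. S n = (\<lambda>v. snd xt *\<^sub>R (v - fst xt)) ` K \<inter> cball 0 1 \<and> fst xt \<in> K \<and> 1 \<le> snd xt"
  proof
    fix n
    from S have "S n \<in> minisets K" by blast
    then have "\<exists>x t. S n = (\<lambda>v. t *\<^sub>R (v - x)) ` K \<inter> cball 0 1 \<and> x \<in> K \<and> 1 \<le> t"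
      unfolding minisets_def by simp
    then obtain x t where "S n = (\<lambda>v. t *\<^sub>R (v - x)) ` K \<inter> cball 0 1" "x \<in> K" "1 \<le> t"
      by (elim exE conjE)
    then show "\<exists>xt. S n = (\<lambda>v. snd xt *\<^sub>R (v - fst xt)) ` K \<inter> cball 0 1 \<and> fst xt \<in> K \<and> 1 \<le> snd xt"
      by (intro exI[of _ "(x, t)"]) simp
  qed
  then have "\<exists>g. \<forall>n. S n = (\<lambda>v. snd (g n) *\<^sub>R (v - fst (g n))) ` K \<inter> cball 0 1 \<and> fst (g n) \<in> K \<and> 1 \<le> snd (g n)"
    by (rule choice)
  then obtain g where g: "\<And>n. S n = (\<lambda>v. snd (g n) *\<^sub>R (v - fst (g n))) ` K \<inter> cball 0 1 \<and> fst (g n) \<in> K \<and> 1 \<le> snd (g n)"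
    by blast
  define xs where "xs n = fst (g n)" for n
  define ts where "ts n = snd (g n)" for n
  have Sn: "S n = (\<lambda>v. ts n *\<^sub>R (v - xs n)) ` K \<inter> cball 0 1" and xs: "xs n \<in> K" and ts: "1 \<le> ts n" for n
    using g[of n] unfolding xs_def ts_def by auto
  have Sne: "S n \<noteq> {}" for n
  proof -
    have "0 \<in> S n" unfolding Sn using xs[of n] by (auto intro!: image_eqI[of _ _ "xs n"])
    then show ?thesis by blast
  qed
  obtain c where c: "c > 0" and cP: "\<forall>x\<in>K. \<forall>s. 0 < s \<and> s \<le> 1 \<longrightarrow>
      (\<exists>R. c * s \<le> R \<and> R \<le> s \<and> (\<forall>w\<in>K. \<not>(R/L < dist w x \<and> dist w x < R)))"
  proof -
    have "\<forall>L\<ge>2. \<exists>c>0. \<forall>x\<in>K. \<forall>s. 0 < s \<and> s \<le> 1 \<longrightarrow>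
      (\<exists>R. c * s \<le> R \<and> R \<le> s \<and> (\<forall>w\<in>K. \<not>(R/L < dist w x \<and> dist w x < R)))"
      using P unfolding Pann_def .
    from this[rule_format, OF L] show ?thesis using that by (elim exE conjE)
  qed
  obtain yn where yn: "\<And>n. yn n \<in> S n" and ynl: "yn \<longlonglongrightarrow> y" using hd_approx[OF cE Sne hd y] by blast
  have exR: "\<exists>Rn. c/2 \<le> Rn \<and> Rn \<le> 1/2 \<and> (\<forall>w'\<in>S n. \<not>(Rn/L < dist w' (yn n) \<and> dist w' (yn n) < Rn))" for n
  proof -
    obtain z where z: "z \<in> K" "yn n = ts n *\<^sub>R (z - xs n)" using yn[of n] unfolding Sn by blast
    define s where "s = 1 / (2 * ts n)"
    have tpos: "ts n > 0" using ts[of n] by simp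
    have s: "0 < s \<and> s \<le> 1" unfolding s_def using ts[of n] by (simp add: field_simps)
    obtain R' where R': "c * s \<le> R'" "R' \<le> s" "\<forall>w\<in>K. \<not>(R'/L < dist w z \<and> dist w z < R')"
      using cP[rule_format, OF z(1) s] by (elim exE conjE)
    show ?thesis
    proof (intro exI[of _ "ts n * R'"] conjI ballI)
      have "c / 2 = ts n * (c * s)" unfolding s_def using tpos by simp
      also have "\<dots> \<le> ts n * R'" using R'(1) tpos by simp
      finally show "c / 2 \<le> ts n * R'" .
      have "ts n * R' \<le> ts n * s" using R'(2) tpos by simp
      also have "\<dots> = 1/2" unfolding s_def using tpos by simp
      finally show "ts n * R' \<le> 1/2" .
      fix w' assume "w' \<in> S n"
      then obtain v where v: "v \<in> K" "w' = ts n *\<^sub>R (v - xs n)" unfolding Sn by blast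
      have "dist w' (yn n) = ts n * dist v z"
      proof -
        have "w' - yn n = ts n *\<^sub>R (v - z)" unfolding v(2) z(2) by (simp add: algebra_simps)
        then show ?thesis using tpos by (simp add: dist_norm)
      qed
      moreover have "\<not>(R'/L < dist v z \<and> dist v z < R')" using R'(3) v(1) by blast
      ultimately show "\<not>(ts n * R' / L < dist w' (yn n) \<and> dist w' (yn n) < ts n * R')"
      proof (intro notI)
        assume eq: "dist w' (yn n) = ts n * dist v z" and nR: "\<not>(R'/L < dist v z \<and> dist v z < R')"
          and H: "ts n * R' / L < dist w' (yn n) \<and> dist w' (yn n) < ts n * R'"
        have "ts n * (R' / L) < ts n * dist v z" using H eq by simp
        then have 1: "R' / L < dist v z" by (rule mult_less_cancel_left_pos[OF tpos, THEN iffD1])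
        have "ts n * dist v z < ts n * R'" using H eq by simp
        then have 2: "dist v z < R'" by (rule mult_less_cancel_left_pos[OF tpos, THEN iffD1])
        show False using 1 2 nR by blast
      qed
    qed
  qed
  define Rs where "Rs n = (SOME Rn. c/2 \<le> Rn \<and> Rn \<le> 1/2 \<and> (\<forall>w'\<in>S n. \<not>(Rn/L < dist w' (yn n) \<and> dist w' (yn n) < Rn)))" for n
  have Rs: "c/2 \<le> Rs n \<and> Rs n \<le> 1/2 \<and> (\<forall>w'\<in>S n. \<not>(Rs n/L < dist w' (yn n) \<and> dist w' (yn n) < Rs n))" for n
    unfolding Rs_def by (rule someI_ex[OF exR])
  have "seq_compact {c/2..1/2::real}" by (rule compact_imp_seq_compact[OF compact_Icc])
  moreover have "\<forall>n. Rs n \<in> {c/2..1/2}" using Rs by auto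
  ultimately obtain l \<phi> where l: "l \<in> {c/2..1/2}" and phi: "strict_mono (\<phi> :: nat \<Rightarrow> nat)"
    and lim: "(Rs \<circ> \<phi>) \<longlonglongrightarrow> l" by (rule seq_compactE)
  show ?thesis
  proof (intro exI[of _ l] conjI ballI)
    show "0 < l" using l c by simp
    show "l \<le> 1/2" using l by simp
    fix w assume w: "w \<in> E"
    show "\<not>(l/L < dist w y \<and> dist w y < l)"
    proof
      assume A: "l/L < dist w y \<and> dist w y < l"
      obtain wn where wn: "\<And>n. wn n \<in> S n" and wnl: "wn \<longlonglongrightarrow> w" using hd_approx[OF cE Sne hd w] by blast
      have dl: "(\<lambda>n. dist (wn (\<phi> n)) (yn (\<phi> n))) \<longlonglongrightarrow> dist w y"
        using tendsto_dist[OF LIMSEQ_subseq_LIMSEQ[OF wnl phi] LIMSEQ_subseq_LIMSEQ[OF ynl phi]]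
        by (simp add: o_def)
      have lim': "(\<lambda>n. Rs (\<phi> n)) \<longlonglongrightarrow> l" using lim by (simp add: o_def)
      have e1: "\<forall>\<^sub>F n in sequentially. Rs (\<phi> n) / L < dist (wn (\<phi> n)) (yn (\<phi> n))"
      proof -
        have "(\<lambda>n. dist (wn (\<phi> n)) (yn (\<phi> n)) - Rs (\<phi> n) / L) \<longlonglongrightarrow> dist w y - l / L"
          by (intro tendsto_intros dl lim') (use L in simp)
        moreover have "0 < dist w y - l / L" using A by simp
        ultimately have "\<forall>\<^sub>F n in sequentially. 0 < dist (wn (\<phi> n)) (yn (\<phi> n)) - Rs (\<phi> n) / L"
          by (rule order_tendstoD(1))
        then show ?thesis by simp
      qed
      have e2: "\<forall>\<^sub>F n in sequentially. dist (wn (\<phi> n)) (yn (\<phi> n)) < Rs (\<phi> n)"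
      proof -
        have "(\<lambda>n. Rs (\<phi> n) - dist (wn (\<phi> n)) (yn (\<phi> n))) \<longlonglongrightarrow> l - dist w y"
          by (intro tendsto_intros dl lim')
        moreover have "0 < l - dist w y" using A by simp
        ultimately have "\<forall>\<^sub>F n in sequentially. 0 < Rs (\<phi> n) - dist (wn (\<phi> n)) (yn (\<phi> n))"
          by (rule order_tendstoD(1))
        then show ?thesis by simp
      qed
      from eventually_conj[OF e1 e2] obtain N where
        "\<forall>n\<ge>N. Rs (\<phi> n) / L < dist (wn (\<phi> n)) (yn (\<phi> n)) \<and> dist (wn (\<phi> n)) (yn (\<phi> n)) < Rs (\<phi> n)"
        unfolding eventually_sequentially by blast
      then have "Rs (\<phi> N) / L < dist (wn (\<phi> N)) (yn (\<phi> N)) \<and> dist (wn (\<phi> N)) (yn (\<phi> N)) < Rs (\<phi> N)"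
        by blast
      then show False using Rs[of "\<phi> N"] wn[of "\<phi> N"] by blast
    qed
  qed
qed

lemma lower_dim_zero:
  fixes E :: "'a::real_normed_vector set"
  assumes ann: "\<forall>y\<in>E. \<forall>L\<ge>2. \<exists>R>0. R \<le> 1/2 \<and> (\<forall>w\<in>E. \<not>(R/L < dist w y \<and> dist w y < R))"
    and F: "F \<noteq> {}" "F \<subseteq> E"
  shows "lower_dim F = 0"
proof -
  define S where "S = {\<alpha>. \<alpha> > 0 \<and> (\<exists>C>0. \<forall>r R x. 0 < r \<and> r \<le> R \<and> R < 1 \<and> x \<in> F \<longrightarrow>
        real (covnum r (cball x R \<inter> F)) \<ge> C * (R / r) powr \<alpha>)}"
  have "S = {}"
  proof (rule ccontr)
    assume "S \<noteq> {}"
    then obtain \<alpha> C where al: "\<alpha> > 0" and C: "C > 0" and H: "\<forall>r R x. 0 < r \<and> r \<le> R \<and> R < 1 \<and> x \<in> F \<longrightarrow>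
        real (covnum r (cball x R \<inter> F)) \<ge> C * (R / r) powr \<alpha>" unfolding S_def by blast
    obtain x where x: "x \<in> F" using F(1) by blast
    define L where "L = 2 * (2 / C) powr (1 / \<alpha>) + 2"
    have L2: "2 \<le> L" unfolding L_def by simp
    have CL: "2 \<le> C * (L / 2) powr \<alpha>"
    proof -
      have "(2 / C) powr (1 / \<alpha>) \<le> L / 2" unfolding L_def by simp
      then have "((2 / C) powr (1 / \<alpha>)) powr \<alpha> \<le> (L / 2) powr \<alpha>" using al by (intro powr_mono2) auto
      moreover have "((2 / C) powr (1 / \<alpha>)) powr \<alpha> = 2 / C" using al C by (simp add: powr_powr)
      ultimately have "2 / C \<le> (L / 2) powr \<alpha>" by simp
      then show ?thesis using C by (simp add: divide_le_eq mult.commute)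
    qed
    have "x \<in> E" using x F(2) by blast
    with ann L2 obtain R where R: "R > 0" "R \<le> 1/2" and annR: "\<forall>w\<in>E. \<not>(R/L < dist w x \<and> dist w x < R)"
      by blast
    define r where "r = R / L"
    have rpos: "0 < r" unfolding r_def using R L2 by simp
    have rR: "r \<le> R / 2" unfolding r_def using R L2 by (simp add: divide_le_eq field_simps)
    have cov: "covnum r (cball x (R/2) \<inter> F) \<le> 1"
    proof -
      have sub: "cball x (R/2) \<inter> F \<subseteq> (\<Union>c\<in>{x}. cball c r)"
      proof
        fix w assume w: "w \<in> cball x (R/2) \<inter> F"
        then have "w \<in> E" using F(2) by blast
        have "dist w x < R" using w R by (simp add: dist_commute)
        then have "dist w x \<le> R / L" using annR \<open>w \<in> E\<close> by force
        then show "w \<in> (\<Union>c\<in>{x}. cball c r)" unfolding r_def by (simp add: dist_commute)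
      qed
      have mem: "card {x} \<in> {card C | C. finite C \<and> C \<subseteq> cball x (R/2) \<inter> F \<and> cball x (R/2) \<inter> F \<subseteq> (\<Union>c\<in>C. cball c r)}"
        using sub x R by (intro CollectI exI[of _ "{x}"]) auto
      have "covnum r (cball x (R/2) \<inter> F) \<le> card {x}"
        unfolding covnum_def by (rule cInf_lower[OF mem]) (rule bdd_belowI[of _ 0], simp)
      then show ?thesis by simp
    qed
    have "C * ((R/2) / r) powr \<alpha> \<le> real (covnum r (cball x (R/2) \<inter> F))"
      by (rule H[rule_format]) (use rpos rR R x in auto)
    also have "(R/2) / r = L / 2" unfolding r_def using R L2 by (simp add: field_simps)
    finally show False using cov CL by linarith
  qed
  then show ?thesis unfolding lower_dim_def S_def Let_def by simp
qed

theorem micro_zero: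
  fixes K :: "'a::real_normed_vector set"
  assumes P: "Pann K"
  shows "\<forall>E \<in> microsets K. mod_lower_dim E = 0"
proof
  fix E assume E: "E \<in> microsets K"
  then have Ene: "E \<noteq> {}" unfolding microsets_def by blast
  have ann: "\<forall>y\<in>E. \<forall>L\<ge>2. \<exists>R>0. R \<le> 1/2 \<and> (\<forall>w\<in>E. \<not>(R/L < dist w y \<and> dist w y < R))"
    using micro_annulus[OF P E] by blast
  have "{lower_dim F | F. F \<noteq> {} \<and> F \<subseteq> E} = {0}"
  proof
    show "{lower_dim F | F. F \<noteq> {} \<and> F \<subseteq> E} \<subseteq> {0}" using lower_dim_zero[OF ann] by blast
    have E0: "lower_dim E = 0" using lower_dim_zero[OF ann Ene subset_refl] .
    show "{0} \<subseteq> {lower_dim F | F. F \<noteq> {} \<and> F \<subseteq> E}"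
    proof
      fix z assume "z \<in> {0::real}"
      then have "z = lower_dim E" using E0 by simp
      then show "z \<in> {lower_dim F | F. F \<noteq> {} \<and> F \<subseteq> E}" using Ene by blast
    qed
  qed
  then show "mod_lower_dim E = 0" unfolding mod_lower_dim_def by simp
qed

lemma Pann_zero: "Pann {0::'a::real_normed_vector}"
  unfolding Pann_def
proof (intro allI impI)
  fix L :: real assume L: "2 \<le> L"
  show "\<exists>c>0. \<forall>x\<in>{0::'a}. \<forall>s. 0 < s \<and> s \<le> 1 \<longrightarrow>
      (\<exists>R. c * s \<le> R \<and> R \<le> s \<and> (\<forall>w\<in>{0}. \<not>(R/L < dist w x \<and> dist w x < R)))"
  proof (rule exI[of _ 1], intro conjI ballI allI impI)
    fix x :: 'a and s :: real assume x: "x \<in> {0}" and s: "0 < s \<and> s \<le> 1"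
    have "0 \<le> s / L" using L s by simp
    then show "\<exists>R. 1 * s \<le> R \<and> R \<le> s \<and> (\<forall>w\<in>{0}. \<not>(R/L < dist w x \<and> dist w x < R))"
      using x by (intro exI[of _ s]) auto
  qed simp
qed

lemma assouad_zero: "assouad_dim {0::'a::euclidean_space} = 0"
proof -
  have "{\<alpha>. \<alpha> > 0 \<and> (\<exists>C>0. \<forall>r R x. 0 < r \<and> r \<le> R \<and> R < 1 \<and> x \<in> {0::'a} \<longrightarrow>
        real (covnum r (cball x R \<inter> {0})) \<le> C * (R / r) powr \<alpha>)} = {0<..}"
  proof (intro set_eqI iffI)
    fix \<alpha> :: real assume "\<alpha> \<in> {0<..}"
    then have al: "\<alpha> > 0" by simp
    have "real (covnum r (cball x R \<inter> {0::'a})) \<le> 1 * (R / r) powr \<alpha>"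
      if H: "0 < r \<and> r \<le> R \<and> R < 1 \<and> x \<in> {0::'a}" for r R x
    proof -
      have "cball x R \<inter> {0::'a} \<subseteq> (\<Union>c\<in>{0::'a}. cball c (r/2))" using H by auto
      then have "covnum r (cball x R \<inter> {0::'a}) \<le> card {0::'a}" by (intro covnum_le) auto
      then have "real (covnum r (cball x R \<inter> {0::'a})) \<le> 1" by simp
      also have "1 \<le> (R / r) powr \<alpha>" using H al by (intro ge_one_powr_ge_zero) auto
      finally show ?thesis by simp
    qed
    then show "\<alpha> \<in> {\<alpha>. \<alpha> > 0 \<and> (\<exists>C>0. \<forall>r R x. 0 < r \<and> r \<le> R \<and> R < 1 \<and> x \<in> {0::'a} \<longrightarrow>
        real (covnum r (cball x R \<inter> {0})) \<le> C * (R / r) powr \<alpha>)}"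
      using al by (intro CollectI conjI exI[of _ 1]) auto
  qed auto
  then show ?thesis unfolding assouad_dim_def by simp
qed

context cant begin

lemma assouad_KK: "assouad_dim (KK :: 'b::euclidean_space set) = a * real DIM('b)"
  unfolding assouad_dim_def
proof (rule cInf_eq_non_empty)
  have aD: "0 < a * real DIM('b)" using a0 by simp
  have "a * real DIM('b) < a * real DIM('b) + 1" by simp
  from assouad_upper[OF this] obtain C where "C > 0" "\<forall>r R x. 0 < r \<and> r \<le> R \<and> R < 1 \<and> x \<in> (KK::'b set) \<longrightarrow>
           real (covnum r (cball x R \<inter> KK)) \<le> C * (R / r) powr (a * real DIM('b) + 1)"
    by blast
  then have "a * real DIM('b) + 1 \<in> {\<alpha>. \<alpha> > 0 \<and> (\<exists>C>0. \<forall>r R x. 0 < r \<and> r \<le> R \<and> R < 1 \<and> x \<in> (KK::'b set) \<longrightarrow>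
        real (covnum r (cball x R \<inter> KK)) \<le> C * (R / r) powr \<alpha>)}"
    using aD by (intro CollectI conjI exI[of _ C]) auto
  then show "{\<alpha>. \<alpha> > 0 \<and> (\<exists>C>0. \<forall>r R x. 0 < r \<and> r \<le> R \<and> R < 1 \<and> x \<in> (KK::'b set) \<longrightarrow>
        real (covnum r (cball x R \<inter> KK)) \<le> C * (R / r) powr \<alpha>)} \<noteq> {}"
    by blast
next
  fix x assume "x \<in> {\<alpha>. \<alpha> > 0 \<and> (\<exists>C>0. \<forall>r R x. 0 < r \<and> r \<le> R \<and> R < 1 \<and> x \<in> (KK::'b set) \<longrightarrow>
        real (covnum r (cball x R \<inter> KK)) \<le> C * (R / r) powr \<alpha>)}"
  then obtain C where C: "C > 0" and H: "\<forall>r R y. 0 < r \<and> r \<le> R \<and> R < 1 \<and> y \<in> (KK::'b set) \<longrightarrow>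
        real (covnum r (cball y R \<inter> KK)) \<le> C * (R / r) powr x" by blast
  show "a * real DIM('b) \<le> x"
  proof (rule ccontr)
    assume "\<not> a * real DIM('b) \<le> x"
    then have "x < a * real DIM('b)" by simp
    from assouad_lower[OF this C H] show False .
  qed
next
  fix y assume lb: "\<And>x. x \<in> {\<alpha>. \<alpha> > 0 \<and> (\<exists>C>0. \<forall>r R x. 0 < r \<and> r \<le> R \<and> R < 1 \<and> x \<in> (KK::'b set) \<longrightarrow>
        real (covnum r (cball x R \<inter> KK)) \<le> C * (R / r) powr \<alpha>)} \<Longrightarrow> y \<le> x"
  show "y \<le> a * real DIM('b)"
  proof (rule field_le_epsilon)
    fix e :: real assume e: "0 < e"
    have aD: "0 < a * real DIM('b)" using a0 by simp
    have "a * real DIM('b) < a * real DIM('b) + e" using e by simp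
    from assouad_upper[OF this] obtain C where "C > 0" "\<forall>r R x. 0 < r \<and> r \<le> R \<and> R < 1 \<and> x \<in> (KK::'b set) \<longrightarrow>
           real (covnum r (cball x R \<inter> KK)) \<le> C * (R / r) powr (a * real DIM('b) + e)"
      by blast
    then have "a * real DIM('b) + e \<in> {\<alpha>. \<alpha> > 0 \<and> (\<exists>C>0. \<forall>r R x. 0 < r \<and> r \<le> R \<and> R < 1 \<and> x \<in> (KK::'b set) \<longrightarrow>
        real (covnum r (cball x R \<inter> KK)) \<le> C * (R / r) powr \<alpha>)}"
      using aD e by (intro CollectI conjI exI[of _ C]) auto
    then show "y \<le> a * real DIM('b) + e" by (rule lb)
  qed
qed

end

theorem theorem2p3:
  fixes \<alpha> :: real
  assumes "0 \<le> \<alpha>" and "\<alpha> < real DIM('a::euclidean_space)"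
  shows "\<exists>K :: 'a set. compact K \<and> K \<noteq> {} \<and> assouad_dim K = \<alpha> \<and>
           (\<forall>E \<in> microsets K. mod_lower_dim E = 0)"
proof (cases "\<alpha> = 0")
  case True
  show ?thesis
    by (rule exI[of _ "{0::'a}"]) (simp add: True assouad_zero micro_zero[OF Pann_zero])
next
  case False
  define D where "D = real DIM('a)"
  have D: "D > 0" unfolding D_def by simp
  define a where "a = \<alpha> / D"
  have a0: "0 < a" unfolding a_def using assms(1) False D by simp
  have a1: "a < 1" unfolding a_def using assms(2) D unfolding D_def by (simp add: divide_less_eq)
  interpret cant a using a0 a1 by unfold_locales
  have "assouad_dim (KK :: 'a set) = a * real DIM('a)" by (rule assouad_KK)
  then have "assouad_dim (KK :: 'a set) = \<alpha>" using D unfolding a_def D_def by simp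
  moreover have "compact (KK :: 'a set)" by (rule compact_KK)
  moreover have "(KK :: 'a set) \<noteq> {}" using zero_in_KK by blast
  moreover have "\<forall>E \<in> microsets (KK :: 'a set). mod_lower_dim E = 0" by (rule micro_zero[OF Pann_KK])
  ultimately show ?thesis by blast
qed

end
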